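(* Let $X=\ell_p$ for some $1\le p<\infty$, or $X=c_0$, considered as a Banach algebra under coordinatewise multiplication. Let $\mathcal A$ be a finitely invariant Furstenberg family and $\lambda\in\mathbb C$ with $|\lambda|>1$. Then $\lambda B$ admits an algebra of $\mathcal A$-hypercyclic vectors, except zero (i.e. there is a subalgebra $\mathcal B\ne\{0\}$ of $X$ all of whose non-zero elements are $\mathcal A$-hypercyclic for $\lambda B$), if and only if there exists a family $(A(l,m))_{l,m\ge1}$ of pairwise disjoint sets in $\mathcal A$ such that, for any $l,m,l',m'\ge1$ and any $n\in A(l,m)$, $n'\in A(l',m')$ with $n'>n$, we have $n'\ge n+l$ and $n'\frac{m}{m'}\ge n+l+l'$.
   Context: $\lambda B(x(1),x(2),x(3),\ldots)=(\lambda x(2),\lambda x(3),\ldots)$. A Furstenberg family is a non-empty family $\mathcal A$ of subsets of $\mathbb N_0$ with $\varnothing\notin\mathcal A$ and such that $A\in\mathcal A$, $A\subset B\subset\mathbb N_0$ imply $B\in\mathcal A$; it is finitely invariant if $A\in\mathcal A$ implies $A\setminus[0,N]\in\mathcal A$ for all $N\ge0$. A vector $x$ is $\mathcal A$-hypercyclic for an operator $T$ if for every non-empty open $U\subset X$, $\{n\ge0:T^nx\in U\}\in\mathcal A$. *)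

theory Defs
  imports "HOL-Analysis.Analysis"
begin

text \<open>Sequences are indexed from 0: x(1),x(2),... of the paper becomes x 0, x 1, ...\<close>

datatype seqspace = LP real | C0

definition seq_carrier :: "seqspace \<Rightarrow> (nat \<Rightarrow> complex) set" where
  "seq_carrier S = (case S of
      LP p \<Rightarrow> {x. summable (\<lambda>k. norm (x k) powr p)}
    | C0 \<Rightarrow> {x. x \<longlonglongrightarrow> 0})"

definition seq_norm :: "seqspace \<Rightarrow> (nat \<Rightarrow> complex) \<Rightarrow> real" where
  "seq_norm S x = (case S of
      LP p \<Rightarrow> (\<Sum>k. norm (x k) powr p) powr (1 / p)
    | C0 \<Rightarrow> (SUP k. norm (x k)))"

definition admissible_space :: "seqspace \<Rightarrow> bool" where
  "admissible_space S = (case S of LP p \<Rightarrow> 1 \<le> p | C0 \<Rightarrow> True)"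

definition seq_open :: "seqspace \<Rightarrow> (nat \<Rightarrow> complex) set \<Rightarrow> bool" where
  "seq_open S U = (U \<subseteq> seq_carrier S \<and>
     (\<forall>u\<in>U. \<exists>e>0. \<forall>v\<in>seq_carrier S. seq_norm S (\<lambda>k. v k - u k) < e \<longrightarrow> v \<in> U))"

definition wshift :: "complex \<Rightarrow> (nat \<Rightarrow> complex) \<Rightarrow> (nat \<Rightarrow> complex)" where
  "wshift lam x = (\<lambda>k. lam * x (Suc k))"

definition furstenberg_family :: "nat set set \<Rightarrow> bool" where
  "furstenberg_family F = (F \<noteq> {} \<and> {} \<notin> F \<and>
     (\<forall>A B. A \<in> F \<and> A \<subseteq> B \<longrightarrow> B \<in> F))"

definition finitely_invariant :: "nat set set \<Rightarrow> bool" where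
  "finitely_invariant F = (\<forall>A\<in>F. \<forall>N. A - {0..N} \<in> F)"

definition A_hypercyclic ::
  "seqspace \<Rightarrow> nat set set \<Rightarrow> ((nat \<Rightarrow> complex) \<Rightarrow> (nat \<Rightarrow> complex)) \<Rightarrow> (nat \<Rightarrow> complex) \<Rightarrow> bool" where
  "A_hypercyclic S F T x = (x \<in> seq_carrier S \<and>
     (\<forall>U. seq_open S U \<and> U \<noteq> {} \<longrightarrow> {n. (T ^^ n) x \<in> U} \<in> F))"

definition seq_subalgebra :: "seqspace \<Rightarrow> (nat \<Rightarrow> complex) set \<Rightarrow> bool" where
  "seq_subalgebra S B = (B \<subseteq> seq_carrier S \<and> (\<lambda>k. 0) \<in> B \<and>
     (\<forall>x\<in>B. \<forall>y\<in>B. (\<lambda>k. x k + y k) \<in> B \<and> (\<lambda>k. x k * y k) \<in> B) \<and>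
     (\<forall>c::complex. \<forall>x\<in>B. (\<lambda>k. c * x k) \<in> B))"

end

theory Submission
  imports Defs
begin


lemma wshift_pow: "(wshift lam ^^ n) x = (\<lambda>k. lam ^ n * x (n + k))"
  by (induction n arbitrary: x) (auto simp: wshift_def mult.assoc)

lemma powr_add_le2:
  fixes a b p :: real
  assumes "0 \<le> a" "0 \<le> b" "0 < p"
  shows "(a + b) powr p \<le> 2 powr p * (a powr p + b powr p)"
proof -
  have "(a + b) powr p \<le> (2 * max a b) powr p"
    by (rule powr_mono2) (use assms in auto)
  also have "\<dots> = 2 powr p * max a b powr p"
    using assms by (simp add: powr_mult)
  also have "max a b powr p \<le> a powr p + b powr p"
    by (auto simp: max_def)
  hence "2 powr p * max a b powr p \<le> 2 powr p * (a powr p + b powr p)"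
    by (intro mult_left_mono) auto
  finally show ?thesis .
qed

lemma carrier_LP_diff:
  assumes "0 < p" "summable (\<lambda>k. norm (x k) powr p)" "summable (\<lambda>k. norm (y k) powr p)"
  shows "summable (\<lambda>k. norm (x k - y k) powr p)"
proof (rule summable_comparison_test')
  show "summable (\<lambda>k. 2 powr p * (norm (x k) powr p + norm (y k) powr p))"
    using assms by (intro summable_mult summable_add) auto
  fix k
  have "norm (x k - y k) powr p \<le> (norm (x k) + norm (y k)) powr p"
    by (rule powr_mono2) (use assms norm_triangle_ineq4 in auto)
  also have "\<dots> \<le> 2 powr p * (norm (x k) powr p + norm (y k) powr p)"
    by (rule powr_add_le2) (use assms in auto)
  finally show "norm (norm (x k - y k) powr p) \<le> 2 powr p * (norm (x k) powr p + norm (y k) powr p)"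
    by simp
qed

lemma carrier_diff:
  assumes "admissible_space S" "x \<in> seq_carrier S" "y \<in> seq_carrier S"
  shows "(\<lambda>k. x k - y k) \<in> seq_carrier S"
proof (cases S)
  case (LP p)
  then show ?thesis using assms carrier_LP_diff[of p x y]
    by (auto simp: seq_carrier_def admissible_space_def)
next
  case C0
  then show ?thesis using assms tendsto_diff[of x 0 sequentially y 0]
    by (auto simp: seq_carrier_def)
qed

lemma carrier_tendsto0:
  assumes "admissible_space S" "x \<in> seq_carrier S"
  shows "(\<lambda>k. norm (x k)) \<longlonglongrightarrow> 0"
proof (cases S)
  case (LP p)
  hence p: "1 \<le> p" and sm: "summable (\<lambda>k. norm (x k) powr p)"
    using assms by (auto simp: seq_carrier_def admissible_space_def)
  have t: "(\<lambda>k. norm (x k) powr p) \<longlonglongrightarrow> 0"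
    using summable_LIMSEQ_zero[OF sm] .
  have "(\<lambda>k. (norm (x k) powr p) powr (1/p)) \<longlonglongrightarrow> 0 powr (1/p)"
    by (rule tendsto_powr'[OF t]) (use p in auto)
  moreover have "(norm (x k) powr p) powr (1/p) = norm (x k)" for k
    using p by (simp add: powr_powr)
  ultimately show ?thesis using p by simp
next
  case C0
  then show ?thesis using assms tendsto_norm_zero[of x sequentially]
    by (auto simp: seq_carrier_def)
qed

lemma coord_le_norm:
  assumes "admissible_space S" "d \<in> seq_carrier S"
  shows "norm (d k) \<le> seq_norm S d"
proof (cases S)
  case (LP p)
  hence p: "1 \<le> p" and sm: "summable (\<lambda>k. norm (d k) powr p)"
    using assms by (auto simp: seq_carrier_def admissible_space_def)
  have "norm (d k) powr p \<le> (\<Sum>k. norm (d k) powr p)"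
    using sum_le_suminf[OF sm, of "{k}"] by auto
  hence "(norm (d k) powr p) powr (1/p) \<le> (\<Sum>k. norm (d k) powr p) powr (1/p)"
    using p by (intro powr_mono2) auto
  then show ?thesis using p LP by (simp add: powr_powr seq_norm_def)
next
  case C0
  hence "(\<lambda>k. norm (d k)) \<longlonglongrightarrow> 0"
    using carrier_tendsto0 assms by blast
  hence "Bseq (\<lambda>k. norm (d k))" by (intro convergent_imp_Bseq convergentI)
  then obtain K where "\<And>k. norm (norm (d k)) \<le> K" unfolding Bseq_def by blast
  hence "bdd_above (range (\<lambda>k. norm (d k)))" by (intro bdd_aboveI2) auto
  then show ?thesis using C0 unfolding seq_norm_def by (auto intro: cSUP_upper)
qed

lemma finsupp_carrier:
  assumes "\<And>k. k \<ge> K \<Longrightarrow> x k = 0"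
  shows "x \<in> seq_carrier S"
proof (cases S)
  case (LP p)
  have "summable (\<lambda>k. norm (x k) powr p)"
    by (rule summable_finite[of "{..<K}"]) (use assms in auto)
  then show ?thesis using LP by (simp add: seq_carrier_def)
next
  case C0
  have "eventually (\<lambda>k. x k = 0) sequentially"
    using assms by (auto simp: eventually_sequentially)
  hence "x \<longlonglongrightarrow> 0" by (rule tendsto_eventually)
  then show ?thesis using C0 by (simp add: seq_carrier_def)
qed

lemma l1_carrier:
  assumes "admissible_space S" "summable (\<lambda>k. norm (x k))"
  shows "x \<in> seq_carrier S"
proof (cases S)
  case (LP p)
  hence p: "1 \<le> p" using assms by (auto simp: admissible_space_def)
  have "(\<lambda>k. norm (x k)) \<longlonglongrightarrow> 0" using summable_LIMSEQ_zero[OF assms(2)] .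
  hence "eventually (\<lambda>k. norm (x k) < 1) sequentially"
    by (rule order_tendstoD(2)) simp
  hence ev: "eventually (\<lambda>k. norm (x k) \<le> 1) sequentially"
    by eventually_elim simp
  have "summable (\<lambda>k. norm (x k) powr p)"
  proof (rule summable_comparison_test_ev[OF _ assms(2)])
    show "eventually (\<lambda>k. norm (norm (x k) powr p) \<le> norm (x k)) sequentially"
      using ev
    proof eventually_elim
      case (elim k)
      have "norm (x k) powr p \<le> norm (x k) powr 1"
        by (rule powr_mono') (use elim p in auto)
      then show ?case by simp
    qed
  qed
  then show ?thesis using LP by (simp add: seq_carrier_def)
next
  case C0
  have "(\<lambda>k. norm (x k)) \<longlonglongrightarrow> 0" using summable_LIMSEQ_zero[OF assms(2)] .
  hence "x \<longlonglongrightarrow> 0" by (simp add: tendsto_norm_zero_iff)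
  then show ?thesis using C0 by (simp add: seq_carrier_def)
qed



definition Lnec :: "nat \<Rightarrow> nat \<Rightarrow> nat" where
  "Lnec l m = 2 * prod_encode (l, m) + 2"
definition bigp :: "nat \<Rightarrow> nat \<Rightarrow> bool" where
  "bigp L k \<longleftrightarrow> k = 0 \<or> (odd k \<and> k < L)"
definition Rn :: "real \<Rightarrow> nat \<Rightarrow> nat \<Rightarrow> real" where
  "Rn c l m = c ^ (l * m) + 1"
definition epsn :: "real \<Rightarrow> nat \<Rightarrow> nat \<Rightarrow> real" where
  "epsn c l m = 1 / (2 ^ (m + 1) * c ^ l)"
definition Yn :: "real \<Rightarrow> nat \<Rightarrow> nat \<Rightarrow> nat \<Rightarrow> real" where
  "Yn c l m k = (if bigp (Lnec l m) k then Rn c l m else 0)"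
definition Hn :: "real \<Rightarrow> (nat \<Rightarrow> real) \<Rightarrow> nat \<Rightarrow> nat \<Rightarrow> nat \<Rightarrow> bool" where
  "Hn c g l m n \<longleftrightarrow> (\<forall>k. \<bar>c ^ n * g (n + k) ^ m - Yn c l m k\<bar> < epsn c l m)"

lemma Lnec_even: "even (Lnec l m)" by (simp add: Lnec_def)
lemma Lnec_ge: "2 * l + 2 \<le> Lnec l m"
  using le_prod_encode_1[of l m] by (simp add: Lnec_def)
lemma Lnec_inj: "Lnec l m = Lnec l' m' \<Longrightarrow> (l, m) = (l', m')"
  by (simp add: Lnec_def)

lemma param_facts:
  assumes "1 < c"
  shows "0 < epsn c l m" "2 ^ m * epsn c l m \<le> Rn c l m - epsn c l m"
    "3 * epsn c l m \<le> Rn c l m" "c ^ (l * m) \<le> Rn c l m - epsn c l m"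
    "epsn c l m * c ^ l \<le> 1"
proof -
  have cl: "1 \<le> c ^ l" using assms by simp
  have clm: "1 \<le> c ^ (l * m)" using assms by simp
  have p: "2 \<le> (2::real) ^ (m + 1)"
  proof -
    have "(2::real) ^ 1 \<le> 2 ^ (m + 1)" by (rule power_increasing) auto
    then show ?thesis by simp
  qed
  show e0: "0 < epsn c l m" using assms by (simp add: epsn_def)
  have e4: "epsn c l m \<le> 1/2"
  proof -
    have "2 * 1 \<le> 2 ^ (m + 1) * c ^ l" using p cl
      by (intro mult_mono) auto
    then show ?thesis unfolding epsn_def by (simp add: field_simps)
  qed
  have "2 ^ m * epsn c l m = 1 / (2 * c ^ l)" unfolding epsn_def by (simp add: field_simps)
  also have "\<dots> \<le> 1/2" using cl by (simp add: field_simps)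
  finally have "2 ^ m * epsn c l m \<le> 1/2" .
  then show "2 ^ m * epsn c l m \<le> Rn c l m - epsn c l m" using e4 clm by (simp add: Rn_def)
  show "3 * epsn c l m \<le> Rn c l m" using e4 clm by (simp add: Rn_def)
  show "c ^ (l * m) \<le> Rn c l m - epsn c l m" using e4 by (simp add: Rn_def)
  show "epsn c l m * c ^ l \<le> 1"
  proof -
    have "epsn c l m * c ^ l = 1 / 2 ^ (m + 1)" using assms unfolding epsn_def by (simp add: field_simps)
    also have "\<dots> \<le> 1" using one_le_power[of "2::real" "m+1"] by (simp del: power_Suc)
    finally show ?thesis .
  qed
qed

lemma ratio1:
  fixes a b c R e :: real
  assumes "0 < c" "0 \<le> a" "0 \<le> b" "1 \<le> m" "R - e < c ^ n * a ^ m" "c ^ n * b ^ m < e"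
    "2 ^ m * e \<le> R - e"
  shows "2 * b < a"
proof -
  have "c ^ n * (2 * b) ^ m = 2 ^ m * (c ^ n * b ^ m)" by (simp add: power_mult_distrib)
  also have "\<dots> < 2 ^ m * e" using assms(6) by simp
  also have "\<dots> < c ^ n * a ^ m" using assms by linarith
  finally have "(2 * b) ^ m < a ^ m" using assms(1) by simp
  then show ?thesis using assms(2) power_less_imp_less_base by blast
qed

lemma ratio2:
  fixes a b c R e :: real
  assumes "c ^ n * a ^ m < R + e" "R - e < c ^ n * b ^ m" "3 * e \<le> R" "0 < c"
  shows "a ^ m < 2 * b ^ m"
proof -
  have "c ^ n * a ^ m < c ^ n * (2 * b ^ m)" using assms by linarith
  then show ?thesis using assms(4) by simp
qed

lemma ratio_contra:
  fixes a b :: real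
  assumes "2 * b < a" "0 \<le> b" "1 \<le> m" "a ^ m < 2 * b ^ m"
  shows False
proof -
  have "(2 * b) ^ m < a ^ m" by (rule power_strict_mono) (use assms in auto)
  moreover have "2 * b ^ m \<le> (2 * b) ^ m"
  proof -
    have "(2::real) \<le> 2 ^ m" using assms(3)
      by (metis power_one_right power_increasing one_le_numeral)
    then have "2 * b ^ m \<le> 2 ^ m * b ^ m" using assms(2) by (intro mult_right_mono) auto
    then show ?thesis by (simp add: power_mult_distrib)
  qed
  ultimately show False using assms(4) by linarith
qed

lemma Hn_big:
  assumes "Hn c g l m n" "bigp (Lnec l m) k"
  shows "Rn c l m - epsn c l m < c ^ n * g (n + k) ^ m"
        "c ^ n * g (n + k) ^ m < Rn c l m + epsn c l m"
  using assms unfolding Hn_def Yn_def by (auto simp: abs_less_iff dest: spec[of _ k])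

lemma Hn_small:
  assumes "Hn c g l m n" "\<not> bigp (Lnec l m) k"
  shows "c ^ n * g (n + k) ^ m < epsn c l m"
  using assms unfolding Hn_def Yn_def by (auto simp: abs_less_iff dest: spec[of _ k])

lemma Hn_disj:
  assumes c: "1 < c" and g: "\<And>j. 0 \<le> g j" and "1 \<le> m" "1 \<le> m'"
    and H: "Hn c g l m n" and H': "Hn c g l' m' n" and lt: "Lnec l m < Lnec l' m'"
  shows False
proof -
  define k where "k = Lnec l m + 1"
  have "odd k" using Lnec_even[of l m] by (simp add: k_def)
  have "k < Lnec l' m'"
  proof -
    obtain a b where "Lnec l m = 2 * a" "Lnec l' m' = 2 * b" using Lnec_even[of l m] Lnec_even[of l' m'] by (auto elim!: evenE)
    then show ?thesis using lt unfolding k_def by presburger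
  qed
  hence b1: "bigp (Lnec l' m') k" using \<open>odd k\<close> by (simp add: bigp_def)
  have b2: "\<not> bigp (Lnec l m) k" by (simp add: bigp_def k_def)
  have b0: "bigp L 0" for L by (simp add: bigp_def)
  note pf = param_facts[OF c]
  have "2 * g (n + k) < g (n + 0)"
    by (rule ratio1[of c _ _ m "Rn c l m" "epsn c l m" n])
       (use c g \<open>1 \<le> m\<close> Hn_big[OF H b0] Hn_small[OF H b2] pf in auto)
  moreover have "g (n + 0) ^ m' < 2 * g (n + k) ^ m'"
    by (rule ratio2[of c n _ m' "Rn c l' m'" "epsn c l' m'"])
       (use c Hn_big[OF H' b0] Hn_big[OF H' b1] pf in auto)
  ultimately show False using ratio_contra g \<open>1 \<le> m'\<close> by blast
qed

lemma Hn_pair: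
  assumes c: "1 < c" and g: "\<And>j. 0 \<le> g j" and "1 \<le> m" "1 \<le> m'"
    and H: "Hn c g l m n" and H': "Hn c g l' m' n'" and lt: "n < n'" "n' < n + Lnec l m"
  shows False
proof -
  define j where "j = n' - n"
  have j1: "1 \<le> j" "j < Lnec l m" and n'eq: "n' = n + j" using lt by (auto simp: j_def)
  have b0: "bigp L 0" for L by (simp add: bigp_def)
  have b1: "bigp (Lnec l' m') 1" using Lnec_ge[of l' m'] by (simp add: bigp_def)
  note pf = param_facts[OF c]
  have A1: "g n' ^ m' < 2 * g (n' + 1) ^ m'"
    by (rule ratio2[of c n' _ m' "Rn c l' m'" "epsn c l' m'"])
       (use c Hn_big[OF H' b0] Hn_big[OF H' b1] pf in auto)
  have A2: "g (n' + 1) ^ m' < 2 * g n' ^ m'"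
    by (rule ratio2[of c n' _ m' "Rn c l' m'" "epsn c l' m'"])
       (use c Hn_big[OF H' b0] Hn_big[OF H' b1] pf in auto)
  show False
  proof (cases "odd j")
    case True
    have bj: "bigp (Lnec l m) j" using True j1 by (simp add: bigp_def)
    have bj1: "\<not> bigp (Lnec l m) (j + 1)" using True by (simp add: bigp_def)
    have "2 * g (n + (j + 1)) < g (n + j)"
      by (rule ratio1[of c _ _ m "Rn c l m" "epsn c l m" n])
         (use c g \<open>1 \<le> m\<close> Hn_big[OF H bj] Hn_small[OF H bj1] pf in auto)
    then show False using A1 ratio_contra[of "g (n' + 1)" "g n'" m'] g \<open>1 \<le> m'\<close> n'eq by (simp add: add.assoc)
  next
    case False
    have bj: "\<not> bigp (Lnec l m) j" using False j1 by (simp add: bigp_def)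
    have "j + 1 < Lnec l m"
    proof -
      obtain a where "Lnec l m = 2 * a" using Lnec_even[of l m] by (auto elim!: evenE)
      then show ?thesis using False j1 by presburger
    qed
    hence bj1: "bigp (Lnec l m) (j + 1)" using False by (simp add: bigp_def)
    have "2 * g (n + j) < g (n + (j + 1))"
      by (rule ratio1[of c _ _ m "Rn c l m" "epsn c l m" n])
         (use c g \<open>1 \<le> m\<close> Hn_big[OF H bj1] Hn_small[OF H bj] pf in auto)
    then show False using A2 ratio_contra[of "g n'" "g (n' + 1)" m'] g \<open>1 \<le> m'\<close> n'eq by (simp add: add.assoc)
  qed
qed

lemma Hn_growth:
  assumes c: "1 < c" and g: "\<And>j. 0 \<le> g j" and m: "1 \<le> m" "1 \<le> m'"
    and H: "Hn c g l m n" and H': "Hn c g l' m' n'" and le: "n + Lnec l m \<le> n'"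
  shows "(n + l + l') * m' < n' * m"
proof -
  define k where "k = n' - n"
  have nk: "n' = n + k" and kL: "Lnec l m \<le> k" using le by (auto simp: k_def)
  have bk: "\<not> bigp (Lnec l m) k" using kL Lnec_ge[of l m] by (auto simp: bigp_def)
  have b0: "bigp L 0" for L by (simp add: bigp_def)
  note pf = param_facts[OF c]
  define a where "a = g n'"
  have a0: "0 \<le> a" using g by (simp add: a_def)
  have s1: "c ^ n * a ^ m < epsn c l m" using Hn_small[OF H bk] nk by (simp add: a_def)
  have s2: "c ^ (l' * m') < c ^ n' * a ^ m'"
    using Hn_big(1)[OF H' b0] pf(4)[of l' m'] by (simp add: a_def)
  have "(c ^ n * a ^ m * c ^ l) ^ m' < (epsn c l m * c ^ l) ^ m'"
    by (rule power_strict_mono) (use s1 c a0 m in auto)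
  also have "\<dots> \<le> 1" using pf(5)[of l m] pf(1)[of l m] c
    by (intro power_le_one) auto
  moreover have "(c ^ n * a ^ m * c ^ l) ^ m' = c ^ (n * m') * c ^ (l * m') * a ^ (m * m')"
    by (simp only: power_mult_distrib power_mult) (simp add: mult_ac)
  ultimately have t1: "c ^ (n * m') * c ^ (l * m') * a ^ (m * m') < 1"
    by simp
  have "c ^ (l' * m') \<le> (c ^ (l' * m')) ^ m"
    using power_increasing[of 1 m "c ^ (l' * m')"] c m by simp
  moreover have "(c ^ (l' * m')) ^ m < (c ^ n' * a ^ m') ^ m"
    by (rule power_strict_mono) (use s2 c m in auto)
  moreover have "(c ^ n' * a ^ m') ^ m = c ^ (n' * m) * a ^ (m * m')"
    by (simp only: power_mult_distrib power_mult mult.commute[of m m'])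
  ultimately have t2: "c ^ (l' * m') < c ^ (n' * m) * a ^ (m * m')"
    by simp
  have "c ^ ((n + l + l') * m') = c ^ (l' * m') * (c ^ (n * m') * c ^ (l * m'))"
    by (simp add: algebra_simps power_add)
  also have "\<dots> < c ^ (n' * m) * a ^ (m * m') * (c ^ (n * m') * c ^ (l * m'))"
    using t2 c by (intro mult_strict_right_mono) auto
  also have "\<dots> = c ^ (n' * m) * (c ^ (n * m') * c ^ (l * m') * a ^ (m * m'))"
    by (simp add: mult_ac)
  also have "\<dots> \<le> c ^ (n' * m) * 1"
    using t1 c by (intro mult_left_mono) auto
  finally have "c ^ ((n + l + l') * m') < c ^ (n' * m)" by simp
  then show ?thesis using c power_less_imp_less_exp by blast
qed



lemma open_box:
  assumes adm: "admissible_space S" and y: "y \<in> seq_carrier S" and e: "0 < \<epsilon>"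
  shows "seq_open S {x \<in> seq_carrier S. \<forall>k. norm (x k - y k) < \<epsilon>}"
  unfolding seq_open_def
proof (intro conjI ballI)
  fix x assume x: "x \<in> {x \<in> seq_carrier S. \<forall>k. norm (x k - y k) < \<epsilon>}"
  hence xc: "x \<in> seq_carrier S" and xl: "\<And>k. norm (x k - y k) < \<epsilon>" by auto
  have "(\<lambda>k. norm (x k - y k)) \<longlonglongrightarrow> 0"
    using carrier_tendsto0[OF adm carrier_diff[OF adm xc y]] .
  hence "eventually (\<lambda>k. norm (x k - y k) < \<epsilon> / 2) sequentially"
    using e by (intro order_tendstoD(2)) auto
  then obtain K where K: "\<And>k. k \<ge> K \<Longrightarrow> norm (x k - y k) < \<epsilon> / 2"
    by (auto simp: eventually_sequentially)
  define E where "E = insert (\<epsilon> / 2) ((\<lambda>k. \<epsilon> - norm (x k - y k)) ` {..<K})"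
  have fE: "finite E" by (simp add: E_def)
  have E0: "\<forall>t\<in>E. 0 < t" using xl e by (auto simp: E_def)
  define d where "d = Min E"
  have d0: "0 < d" unfolding d_def using fE E0 by (auto simp: E_def)
  have d1: "d \<le> \<epsilon> / 2" unfolding d_def by (rule Min_le) (use fE in \<open>auto simp: E_def\<close>)
  have d2: "\<And>k. k < K \<Longrightarrow> d \<le> \<epsilon> - norm (x k - y k)" unfolding d_def by (rule Min_le) (use fE in \<open>auto simp: E_def\<close>)
  show "\<exists>e>0. \<forall>v\<in>seq_carrier S. seq_norm S (\<lambda>k. v k - x k) < e \<longrightarrow>
          v \<in> {x \<in> seq_carrier S. \<forall>k. norm (x k - y k) < \<epsilon>}"
  proof (intro exI[of _ d] conjI ballI impI)
    fix v assume v: "v \<in> seq_carrier S" and nv: "seq_norm S (\<lambda>k. v k - x k) < d"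
    show "v \<in> {x \<in> seq_carrier S. \<forall>k. norm (x k - y k) < \<epsilon>}"
    proof (simp add: v, intro allI)
      fix k
      have "norm (v k - x k) \<le> seq_norm S (\<lambda>k. v k - x k)"
        using coord_le_norm[OF adm carrier_diff[OF adm v xc], of k] by simp
      hence vk: "norm (v k - x k) < d" using nv by simp
      have "norm (v k - y k) \<le> norm (v k - x k) + norm (x k - y k)"
        using norm_triangle_ineq[of "v k - x k" "x k - y k"] by simp
      moreover have "d + norm (x k - y k) \<le> \<epsilon>" if "k < K" using d2[OF that] by simp
      moreover have "d + norm (x k - y k) < \<epsilon>" if "\<not> k < K" using d1 K[of k] that by simp
      ultimately show "norm (v k - y k) < \<epsilon>" using vk by (cases "k < K") force+
    qed
  qed (use d0 in auto)
qed auto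

lemma necessity:
  assumes adm: "admissible_space S" and lam: "1 < norm lam"
    and sub: "seq_subalgebra S B" and Bn: "B \<noteq> {\<lambda>k. 0}"
    and hyp: "\<forall>x\<in>B. x \<noteq> (\<lambda>k. 0) \<longrightarrow> A_hypercyclic S F (wshift lam) x"
  shows "\<exists>A :: nat \<Rightarrow> nat \<Rightarrow> nat set.
            (\<forall>l m. 1 \<le> l \<and> 1 \<le> m \<longrightarrow> A l m \<in> F) \<and>
            (\<forall>l m l' m'. 1 \<le> l \<and> 1 \<le> m \<and> 1 \<le> l' \<and> 1 \<le> m' \<and> (l, m) \<noteq> (l', m')
                \<longrightarrow> A l m \<inter> A l' m' = {}) \<and>
            (\<forall>l m l' m' n n'. 1 \<le> l \<and> 1 \<le> m \<and> 1 \<le> l' \<and> 1 \<le> m' \<and>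
                n \<in> A l m \<and> n' \<in> A l' m' \<and> n < n' \<longrightarrow>
                n + l \<le> n' \<and> real n + real l + real l' \<le> real n' * real m / real m')"
proof -
  have zB: "(\<lambda>k. 0) \<in> B" using sub by (simp add: seq_subalgebra_def)
  obtain u where uB: "u \<in> B" and u0: "u \<noteq> (\<lambda>k. 0)" using Bn zB by blast
  then obtain k0 where k0: "u k0 \<noteq> 0" by auto
  define um where "um m = (\<lambda>k. u k ^ m)" for m :: nat
  have umB: "um m \<in> B" if "1 \<le> m" for m
    using that
  proof (induction m rule: dec_induct)
    case base then show ?case using uB by (simp add: um_def)
  next
    case (step m)
    then have "(\<lambda>k. u k * um m k) \<in> B" using sub uB by (simp add: seq_subalgebra_def)
    then show ?case by (simp add: um_def)
  qed
  have um0: "um m \<noteq> (\<lambda>k. 0)" for m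
  proof
    assume "um m = (\<lambda>k. 0)"
    hence "u k0 ^ m = 0" unfolding um_def by meson
    thus False using k0 by simp
  qed
  define c where "c = norm lam"
  have c1: "1 < c" using lam by (simp add: c_def)
  define g where "g j = norm (u j)" for j
  have g0: "\<And>j. 0 \<le> g j" by (simp add: g_def)
  define y where "y l m = (\<lambda>k. complex_of_real (Yn c l m k))" for l m
  have yc: "y l m \<in> seq_carrier S" for l m
  proof (rule finsupp_carrier[of "Lnec l m"])
    fix k assume "Lnec l m \<le> k"
    hence "\<not> bigp (Lnec l m) k" using Lnec_ge[of l m] by (auto simp: bigp_def)
    then show "y l m k = 0" by (simp add: y_def Yn_def)
  qed
  define U where "U l m = {x \<in> seq_carrier S. \<forall>k. norm (x k - y l m k) < epsn c l m}" for l m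
  define A where "A l m = {n. (wshift lam ^^ n) (um m) \<in> U l m}" for l m
  have AF: "A l m \<in> F" if "1 \<le> l" "1 \<le> m" for l m
  proof -
    have "A_hypercyclic S F (wshift lam) (um m)" using hyp umB[OF that(2)] um0 by blast
    moreover have "seq_open S (U l m)"
      unfolding U_def by (rule open_box[OF adm yc]) (use param_facts[OF c1] in auto)
    moreover have "U l m \<noteq> {}"
    proof -
      have "y l m \<in> U l m" using yc param_facts(1)[OF c1, of l m] by (simp add: U_def)
      then show ?thesis by blast
    qed
    ultimately show ?thesis unfolding A_def A_hypercyclic_def by blast
  qed
  have AH: "Hn c g l m n" if "n \<in> A l m" for l m n
    unfolding Hn_def
  proof
    fix k
    have "norm (lam ^ n * um m (n + k) - y l m k) < epsn c l m"
      using that by (simp add: A_def U_def wshift_pow)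
    moreover have "Yn c l m k \<ge> 0"
      using c1 by (simp add: Yn_def Rn_def)
    moreover have "\<bar>norm (lam ^ n * um m (n + k)) - norm (y l m k)\<bar> \<le> norm (lam ^ n * um m (n + k) - y l m k)"
      by (rule norm_triangle_ineq3)
    ultimately show "\<bar>c ^ n * g (n + k) ^ m - Yn c l m k\<bar> < epsn c l m"
      by (simp add: c_def g_def um_def y_def norm_mult norm_power)
  qed
  show ?thesis
  proof (intro exI[of _ A] conjI allI impI)
    fix l m :: nat assume "1 \<le> l \<and> 1 \<le> m" then show "A l m \<in> F" using AF by blast
  next
    fix l m l' m' :: nat
    assume as: "1 \<le> l \<and> 1 \<le> m \<and> 1 \<le> l' \<and> 1 \<le> m' \<and> (l, m) \<noteq> (l', m')"
    show "A l m \<inter> A l' m' = {}"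
    proof (rule ccontr)
      assume "A l m \<inter> A l' m' \<noteq> {}"
      then obtain n where n: "n \<in> A l m" "n \<in> A l' m'" by blast
      have "Lnec l m \<noteq> Lnec l' m'" using as Lnec_inj by blast
      then consider "Lnec l m < Lnec l' m'" | "Lnec l' m' < Lnec l m" by linarith
      then show False
      proof cases
        case 1 then show ?thesis using Hn_disj[OF c1 g0 _ _ AH[OF n(1)] AH[OF n(2)]] as by auto
      next
        case 2 then show ?thesis using Hn_disj[OF c1 g0 _ _ AH[OF n(2)] AH[OF n(1)]] as by auto
      qed
    qed
  next
    fix l m l' m' n n' :: nat
    assume as: "1 \<le> l \<and> 1 \<le> m \<and> 1 \<le> l' \<and> 1 \<le> m' \<and> n \<in> A l m \<and> n' \<in> A l' m' \<and> n < n'"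
    have H: "Hn c g l m n" and H': "Hn c g l' m' n'" using as AH by auto
    have le: "n + Lnec l m \<le> n'"
    proof (rule ccontr)
      assume "\<not> n + Lnec l m \<le> n'"
      then show False using Hn_pair[OF c1 g0 _ _ H H'] as by auto
    qed
    then show "n + l \<le> n'" using Lnec_ge[of l m] by linarith
    have "(n + l + l') * m' < n' * m" using Hn_growth[OF c1 g0 _ _ H H' le] as by auto
    hence "real ((n + l + l') * m') \<le> real (n' * m)" by linarith
    hence "(real n + real l + real l') * real m' \<le> real n' * real m" by simp
    then show "real n + real l + real l' \<le> real n' * real m / real m'"
      using as by (simp add: field_simps)
  qed
qed



lemma approx_lemma:
  assumes adm: "admissible_space S" and v: "v \<in> seq_carrier S" and e: "0 < e"
  shows "\<exists>w \<delta>. 0 < \<delta> \<and> \<delta> \<le> 1 \<and> (\<forall>x. x \<in> seq_carrier S \<longrightarrow> (\<forall>k<w. norm (x k - v k) \<le> \<delta>) \<longrightarrow>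
            (\<forall>K. finite K \<longrightarrow> K \<subseteq> {w..} \<longrightarrow> (\<Sum>k\<in>K. norm (x k)) \<le> \<delta>) \<longrightarrow>
            seq_norm S (\<lambda>k. x k - v k) < e)"
proof (cases S)
  case (LP p)
  have p: "1 \<le> p" using adm LP by (simp add: admissible_space_def)
  have sv: "summable (\<lambda>k. norm (v k) powr p)" using v LP by (simp add: seq_carrier_def)
  define ep where "ep = e powr p"
  have ep0: "0 < ep" using e by (simp add: ep_def)
  define \<tau> where "\<tau> = ep / (4 * 2 powr p)"
  have \<tau>0: "0 < \<tau>" using ep0 by (simp add: \<tau>_def)
  obtain w where w: "\<And>N. norm (\<Sum>k\<in>{w..<N}. norm (v k) powr p) < \<tau>"
  proof -
    obtain N where "\<forall>m\<ge>N. \<forall>n. norm (\<Sum>k\<in>{m..<n}. norm (v k) powr p) < \<tau>"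
      using sv \<tau>0 unfolding summable_Cauchy by blast
    then show ?thesis using that by blast
  qed
  define \<delta> where "\<delta> = min 1 (ep / (4 * (real w + 2 powr p)))"
  have "0 < 4 * (real w + 2 powr p)" by (simp add: add_nonneg_pos)
  hence \<delta>0: "0 < \<delta>" using ep0 unfolding \<delta>_def by simp
  have \<delta>1: "\<delta> \<le> 1" by (simp add: \<delta>_def)
  have \<delta>2: "(real w + 2 powr p) * \<delta> \<le> ep / 4"
  proof -
    have "\<delta> \<le> ep / (4 * (real w + 2 powr p))" by (simp add: \<delta>_def)
    hence "(real w + 2 powr p) * \<delta> \<le> (real w + 2 powr p) * (ep / (4 * (real w + 2 powr p)))"
      by (intro mult_left_mono) auto
    also have "\<dots> = ep / 4"
    proof -
      have "0 < real w + 2 powr p" by (simp add: add_nonneg_pos)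
      then show ?thesis by (simp add: field_simps)
    qed
    finally show ?thesis .
  qed
  show ?thesis
  proof (intro exI[of _ w] exI[of _ \<delta>] conjI allI impI)
    fix x assume xc: "x \<in> seq_carrier S" and x1: "\<forall>k<w. norm (x k - v k) \<le> \<delta>"
      and x2: "\<forall>K. finite K \<longrightarrow> K \<subseteq> {w..} \<longrightarrow> (\<Sum>k\<in>K. norm (x k)) \<le> \<delta>"
    define f where "f k = norm (x k - v k) powr p" for k
    have sf: "summable f"
      using carrier_diff[OF adm xc v] LP by (simp add: seq_carrier_def f_def[abs_def])
    have f0: "0 \<le> f k" for k by (simp add: f_def)
    have xk: "norm (x k) \<le> \<delta>" if "w \<le> k" for k using x2[rule_format, of "{k}"] that by auto
    have fa: "f k \<le> \<delta>" if "k < w" for k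
    proof -
      have "f k \<le> \<delta> powr p" unfolding f_def using x1 that p by (intro powr_mono2) auto
      also have "\<dots> \<le> \<delta> powr 1" using \<delta>0 \<delta>1 p by (intro powr_mono') auto
      finally show ?thesis using \<delta>0 by simp
    qed
    have fb: "f k \<le> 2 powr p * (norm (x k) + norm (v k) powr p)" if "w \<le> k" for k
    proof -
      have "f k \<le> (norm (x k) + norm (v k)) powr p"
        unfolding f_def by (rule powr_mono2) (use p norm_triangle_ineq4 in auto)
      also have "\<dots> \<le> 2 powr p * (norm (x k) powr p + norm (v k) powr p)"
        by (rule powr_add_le2) (use p in auto)
      also have "norm (x k) powr p \<le> norm (x k) powr 1"
        using xk[OF that] \<delta>1 p by (intro powr_mono') auto
      hence "2 powr p * (norm (x k) powr p + norm (v k) powr p) \<le> 2 powr p * (norm (x k) + norm (v k) powr p)"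
        by (intro mult_left_mono) auto
      finally show ?thesis .
    qed
    have bound: "sum f {..<N} \<le> 3 * ep / 4" for N
    proof -
      define M where "M = max N w"
      have "sum f {..<N} \<le> sum f {..<M}"
        by (rule sum_mono2) (auto simp: M_def f0)
      also have "{..<M} = {..<w} \<union> {w..<M}" by (auto simp: M_def)
      also have "sum f \<dots> = sum f {..<w} + sum f {w..<M}" by (rule sum.union_disjoint) auto
      also have "sum f {..<w} \<le> (\<Sum>k<w. \<delta>)" by (rule sum_mono) (use fa in auto)
      also have "sum f {w..<M} \<le> (\<Sum>k\<in>{w..<M}. 2 powr p * (norm (x k) + norm (v k) powr p))"
        by (rule sum_mono) (use fb in auto)
      also have "\<dots> = 2 powr p * ((\<Sum>k\<in>{w..<M}. norm (x k)) + (\<Sum>k\<in>{w..<M}. norm (v k) powr p))"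
        by (simp add: sum.distrib sum_distrib_left distrib_left)
      also have "\<dots> \<le> 2 powr p * (\<delta> + \<tau>)"
      proof -
        have "(\<Sum>k\<in>{w..<M}. norm (x k)) \<le> \<delta>" using x2[rule_format, of "{w..<M}"] by (simp add: subset_eq)
        moreover have "(\<Sum>k\<in>{w..<M}. norm (v k) powr p) \<le> \<tau>" using w[of M] by simp
        ultimately show ?thesis by (intro mult_left_mono) auto
      qed
      finally have "sum f {..<N} \<le> real w * \<delta> + 2 powr p * \<delta> + 2 powr p * \<tau>"
        by (simp add: algebra_simps)
      also have "\<dots> = (real w + 2 powr p) * \<delta> + ep / 4" by (simp add: \<tau>_def algebra_simps)
      also have "\<dots> \<le> 3 * ep / 4" using \<delta>2 ep0 by linarith
      finally show ?thesis by simp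
    qed
    have "suminf f \<le> 3 * ep / 4" by (rule suminf_le_const[OF sf bound])
    hence lt: "suminf f < ep" using ep0 by simp
    have "suminf f powr (1/p) < ep powr (1/p)"
      by (rule powr_less_mono2) (use lt p suminf_nonneg[OF sf] f0 in auto)
    also have "ep powr (1/p) = e" using p e by (simp add: ep_def powr_powr)
    finally show "seq_norm S (\<lambda>k. x k - v k) < e" using LP by (simp add: seq_norm_def f_def[abs_def])
  qed (use \<delta>0 \<delta>1 in auto)
next
  case C0
  have "(\<lambda>k. norm (v k)) \<longlonglongrightarrow> 0" using carrier_tendsto0[OF adm v] .
  hence "eventually (\<lambda>k. norm (v k) < e / 4) sequentially" using e by (intro order_tendstoD(2)) auto
  then obtain w where w: "\<And>k. k \<ge> w \<Longrightarrow> norm (v k) < e / 4" by (auto simp: eventually_sequentially)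
  define \<delta> where "\<delta> = min 1 (e / 4)"
  have \<delta>0: "0 < \<delta>" using e by (simp add: \<delta>_def)
  show ?thesis
  proof (intro exI[of _ w] exI[of _ \<delta>] conjI allI impI)
    fix x assume xc: "x \<in> seq_carrier S" and x1: "\<forall>k<w. norm (x k - v k) \<le> \<delta>"
      and x2: "\<forall>K. finite K \<longrightarrow> K \<subseteq> {w..} \<longrightarrow> (\<Sum>k\<in>K. norm (x k)) \<le> \<delta>"
    have each: "norm (x k - v k) \<le> e / 2" for k
    proof (cases "k < w")
      case True then show ?thesis using x1 e by (force simp: \<delta>_def)
    next
      case False
      have "norm (x k) \<le> \<delta>" using x2[rule_format, of "{k}"] False by auto
      moreover have "norm (x k - v k) \<le> norm (x k) + norm (v k)" by (rule norm_triangle_ineq4)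
      ultimately show ?thesis using w[of k] False by (auto simp: \<delta>_def)
    qed
    have "(SUP k. norm (x k - v k)) \<le> e / 2" by (rule cSUP_least) (use each in auto)
    then show "seq_norm S (\<lambda>k. x k - v k) < e" using C0 e by (simp add: seq_norm_def)
  qed (use \<delta>0 in \<open>auto simp: \<delta>_def\<close>)
qed

lemma summable_poly_geom:
  fixes r :: real
  assumes "0 \<le> r" "r < 1"
  shows "summable (\<lambda>n. real n ^ k * r ^ n)"
proof (cases "r = 0")
  case True
  show ?thesis by (rule summable_ratio_test[of 0 0]) (use True in auto)
next
  case False
  hence r0: "0 < r" using assms by simp
  define q where "q = (1 + r) / (2 * r)"
  have q1: "1 < q" using r0 assms by (simp add: q_def field_simps)
  have "(\<lambda>n. (1 + 1 / real n) ^ k) \<longlonglongrightarrow> (1 + 0) ^ k"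
    by (intro tendsto_intros lim_1_over_n)
  hence "eventually (\<lambda>n. (1 + 1 / real n) ^ k < q) sequentially"
    using q1 by (intro order_tendstoD(2)) auto
  then obtain N where N: "\<And>n. n \<ge> N \<Longrightarrow> (1 + 1 / real n) ^ k < q"
    by (auto simp: eventually_sequentially)
  show ?thesis
  proof (rule summable_ratio_test[of "(1 + r) / 2" "max N 1"])
    show "(1 + r) / 2 < 1" using assms by simp
    fix n assume n: "max N 1 \<le> n"
    hence n1: "1 \<le> n" and nN: "N \<le> n" by auto
    have "real (Suc n) = real n * (1 + 1 / real n)" using n1 by (simp add: field_simps)
    hence "real (Suc n) ^ k = real n ^ k * (1 + 1 / real n) ^ k" by (simp add: power_mult_distrib)
    also have "\<dots> \<le> real n ^ k * q" using N[OF nN] by (intro mult_left_mono) auto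
    finally have a: "real (Suc n) ^ k \<le> real n ^ k * q" .
    have "norm (real (Suc n) ^ k * r ^ Suc n) = real (Suc n) ^ k * r ^ Suc n" using assms by simp
    also have "\<dots> \<le> real n ^ k * q * r ^ Suc n" using a assms by (intro mult_right_mono) auto
    also have "\<dots> = (q * r) * (real n ^ k * r ^ n)" by (simp add: algebra_simps)
    also have "q * r = (1 + r) / 2" using r0 by (simp add: q_def field_simps)
    finally show "norm (real (Suc n) ^ k * r ^ Suc n) \<le> (1 + r) / 2 * norm (real n ^ k * r ^ n)"
      using assms by simp
  qed
qed

definition croot :: "nat \<Rightarrow> complex \<Rightarrow> complex" where
  "croot m z = (if z = 0 then 0 else exp (Ln z / of_nat m))"

lemma croot_pow: "1 \<le> m \<Longrightarrow> croot m z ^ m = z"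
proof -
  assume m: "1 \<le> m"
  show ?thesis
  proof (cases "z = 0")
    case True then show ?thesis using m by (simp add: croot_def)
  next
    case False
    have "croot m z ^ m = exp (Ln z / of_nat m) ^ m"
      using False by (simp add: croot_def)
    also have "\<dots> = exp (of_nat m * (Ln z / of_nat m))"
      by (rule exp_of_nat_mult[symmetric])
    also have "\<dots> = exp (Ln z)" using m by simp
    also have "\<dots> = z" using False by simp
    finally show ?thesis .
  qed
qed

lemma poly_bound1: "\<exists>C\<ge>0. \<forall>z::complex. norm z \<le> 1 \<longrightarrow> norm (poly p z) \<le> C"
proof (intro exI conjI allI impI)
  show "0 \<le> (\<Sum>i\<le>degree p. norm (coeff p i))" by (intro sum_nonneg) auto
  fix z :: complex assume z: "norm z \<le> 1"
  have "norm (poly p z) = norm (\<Sum>i\<le>degree p. coeff p i * z ^ i)" by (simp add: poly_altdef)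
  also have "\<dots> \<le> (\<Sum>i\<le>degree p. norm (coeff p i * z ^ i))" by (rule norm_sum)
  also have "\<dots> \<le> (\<Sum>i\<le>degree p. norm (coeff p i))"
  proof (rule sum_mono)
    fix i
    have "norm (z ^ i) \<le> 1" using z by (simp add: norm_power power_le_one)
    then show "norm (coeff p i * z ^ i) \<le> norm (coeff p i)"
      by (simp add: norm_mult mult_left_le)
  qed
  finally show "norm (poly p z) \<le> (\<Sum>i\<le>degree p. norm (coeff p i))" .
qed

lemma poly_lin:
  assumes "poly p 0 = (0::complex)"
  shows "\<exists>C\<ge>0. \<forall>z. norm z \<le> 1 \<longrightarrow> norm (poly p z) \<le> C * norm z"
proof -
  obtain a q where pq: "p = pCons a q" by (cases p)
  have "a = 0" using assms pq by simp
  obtain C where C: "C \<ge> 0" "\<And>z. norm z \<le> 1 \<Longrightarrow> norm (poly q z) \<le> C" using poly_bound1 by blast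
  show ?thesis
  proof (intro exI[of _ C] conjI allI impI)
    fix z :: complex assume "norm z \<le> 1"
    then show "norm (poly p z) \<le> C * norm z"
      using C pq \<open>a = 0\<close> mult_left_mono[OF C(2)[OF \<open>norm z \<le> 1\<close>] norm_ge_zero[of z]]
      by (simp add: norm_mult mult.commute)
  qed (use C in auto)
qed

lemma poly_lowest:
  assumes "p \<noteq> 0" "poly p 0 = (0::complex)"
  shows "\<exists>m a C. 1 \<le> m \<and> a \<noteq> 0 \<and> 0 \<le> C \<and>
           (\<forall>z. norm z \<le> 1 \<longrightarrow> norm (poly p z - z ^ m * a) \<le> C * norm z ^ (m + 1))"
proof -
  obtain q where pq: "p = [:- 0, 1:] ^ order 0 p * q" and nd: "\<not> [:- 0, 1:] dvd q"
    using order_decomp[OF assms(1)] by blast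
  define m where "m = order 0 p"
  have m1: "1 \<le> m" using assms order_root[of p 0] by (simp add: m_def)
  have a0: "poly q 0 \<noteq> 0" using nd poly_eq_0_iff_dvd[of q 0] by simp
  obtain a q1 where qq: "q = pCons a q1" by (cases q)
  have aq: "a = poly q 0" using qq by simp
  obtain C where C: "C \<ge> 0" "\<And>z. norm z \<le> 1 \<Longrightarrow> norm (poly q1 z) \<le> C" using poly_bound1 by blast
  have pz: "poly p z = z ^ m * (a + z * poly q1 z)" for z
  proof -
    have "poly p z = poly ([:- 0, 1:] ^ order 0 p * q) z" using arg_cong[OF pq, of "\<lambda>r. poly r z"] .
    also have "\<dots> = z ^ m * poly q z" by (simp add: m_def poly_power)
    also have "poly q z = a + z * poly q1 z" using qq by simp
    finally show ?thesis .
  qed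
  show ?thesis
  proof (intro exI[of _ m] exI[of _ a] exI[of _ C] conjI allI impI)
    fix z :: complex assume z: "norm z \<le> 1"
    have "poly p z - z ^ m * a = z ^ (m + 1) * poly q1 z" using pz by (simp add: algebra_simps)
    hence "norm (poly p z - z ^ m * a) = norm z ^ (m + 1) * norm (poly q1 z)"
      by (simp add: norm_mult norm_power)
    also have "\<dots> \<le> norm z ^ (m + 1) * C" using C(2)[OF z] by (intro mult_left_mono) auto
    finally show "norm (poly p z - z ^ m * a) \<le> C * norm z ^ (m + 1)" by (simp add: mult.commute)
  qed (use m1 a0 aq C in auto)
qed

definition Tg :: "nat \<Rightarrow> complex list" where
  "Tg t = map (\<lambda>(a, b). Complex (of_rat a) (of_rat b)) (from_nat t :: (rat \<times> rat) list)"

lemma rat_approx_complex: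
  assumes "0 < \<eta>"
  shows "\<exists>ab :: rat \<times> rat. norm ((\<lambda>(a, b). Complex (of_rat a) (of_rat b)) ab - z) < \<eta>"
proof -
  obtain r1 where r1: "r1 \<in> \<rat>" "Re z - \<eta>/2 < r1" "r1 < Re z + \<eta>/2"
    using Rats_dense_in_real[of "Re z - \<eta>/2" "Re z + \<eta>/2"] assms by auto
  obtain r2 where r2: "r2 \<in> \<rat>" "Im z - \<eta>/2 < r2" "r2 < Im z + \<eta>/2"
    using Rats_dense_in_real[of "Im z - \<eta>/2" "Im z + \<eta>/2"] assms by auto
  obtain a where a: "r1 = of_rat a" using r1(1) Rats_cases by blast
  obtain b where b: "r2 = of_rat b" using r2(1) Rats_cases by blast
  have "norm (Complex r1 r2 - z) \<le> \<bar>Re (Complex r1 r2 - z)\<bar> + \<bar>Im (Complex r1 r2 - z)\<bar>"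
    by (rule cmod_le)
  also have "\<dots> < \<eta>" using r1 r2 by (simp add: abs_less_iff)
  finally show ?thesis using a b by (intro exI[of _ "(a, b)"]) simp
qed

lemma Tg_dense:
  assumes "0 < \<eta>"
  shows "\<exists>t. length (Tg t) = length ys \<and> (\<forall>i<length ys. norm (Tg t ! i - ys ! i) < \<eta>)"
proof -
  define h where "h = (\<lambda>(a, b). Complex (of_rat a) (of_rat b))"
  define sel where "sel z = (SOME ab :: rat \<times> rat. norm (h ab - z) < \<eta>)" for z
  have sel: "norm (h (sel z) - z) < \<eta>" for z
    unfolding sel_def using someI_ex[OF rat_approx_complex[OF assms, of z]] by (simp add: h_def)
  define l where "l = map sel ys"
  have "Tg (to_nat l) = map h l" by (simp add: Tg_def h_def)
  then show ?thesis using sel by (intro exI[of _ "to_nat l"]) (simp add: l_def)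
qed

lemma Tg_one: "\<exists>t. Tg t = [1]"
proof -
  have "Tg (to_nat [(1::rat, 0::rat)]) = [1]" by (simp add: Tg_def complex_eq_iff)
  then show ?thesis by blast
qed



locale suff =
  fixes S :: seqspace and F :: "nat set set" and lam :: complex and A :: "nat \<Rightarrow> nat \<Rightarrow> nat set"
  assumes adm: "admissible_space S" and fam: "furstenberg_family F" and finv: "finitely_invariant F"
    and lam: "1 < norm lam"
    and A1: "\<And>l m. 1 \<le> l \<Longrightarrow> 1 \<le> m \<Longrightarrow> A l m \<in> F"
    and A2: "\<And>l m l' m'. 1 \<le> l \<Longrightarrow> 1 \<le> m \<Longrightarrow> 1 \<le> l' \<Longrightarrow> 1 \<le> m' \<Longrightarrow> (l, m) \<noteq> (l', m')
               \<Longrightarrow> A l m \<inter> A l' m' = {}"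
    and A3: "\<And>l m l' m' n n'. 1 \<le> l \<Longrightarrow> 1 \<le> m \<Longrightarrow> 1 \<le> l' \<Longrightarrow> 1 \<le> m' \<Longrightarrow>
               n \<in> A l m \<Longrightarrow> n' \<in> A l' m' \<Longrightarrow> n < n' \<Longrightarrow>
               n + l \<le> n' \<and> real n + real l + real l' \<le> real n' * real m / real m'"
begin

definition c :: real where "c = norm lam"
lemma c1: "1 < c" using lam by (simp add: c_def)
lemma c0: "0 < c" using c1 by simp

definition Nth :: "nat \<Rightarrow> nat" where
  "Nth L = 2 * L * L + L + (LEAST N. real L \<le> c ^ N)"

lemma Nth: "real L \<le> c ^ Nth L" "2 * L * L \<le> Nth L" "L \<le> Nth L"
proof -
  obtain N where "real L < c ^ N" using real_arch_pow[OF c1] by blast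
  hence ex: "real L \<le> c ^ N" by simp
  have "real L \<le> c ^ (LEAST N. real L \<le> c ^ N)" by (rule LeastI[of _ N]) (rule ex)
  also have "\<dots> \<le> c ^ Nth L" using c1 by (intro power_increasing) (auto simp: Nth_def)
  finally show "real L \<le> c ^ Nth L" .
qed (auto simp: Nth_def)

definition Tl :: "nat \<Rightarrow> complex list" where
  "Tl L = (if length (Tg (fst (prod_decode L))) \<le> L \<and> (\<forall>z\<in>set (Tg (fst (prod_decode L))). norm z \<le> real L)
           then Tg (fst (prod_decode L)) else [])"
definition len :: "nat \<Rightarrow> nat" where "len L = length (Tl L)"

lemma len_le: "len L \<le> L" by (simp add: len_def Tl_def)
lemma Tl_bound: "i < len L \<Longrightarrow> norm (Tl L ! i) \<le> real L"
  by (auto simp: len_def Tl_def split: if_splits)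

definition blk :: "nat \<Rightarrow> nat \<Rightarrow> nat \<Rightarrow> bool" where
  "blk L m n \<longleftrightarrow> 1 \<le> m \<and> m \<le> L \<and> n \<in> A L m \<and> Nth L < n"

lemma blk_L1: "blk L m n \<Longrightarrow> 1 \<le> L" by (auto simp: blk_def)

lemma blk_order:
  assumes "blk L m n" "blk L' m' n'" "n < n'"
  shows "n + L \<le> n'" "real n + real L + real L' \<le> real n' * real m / real m'"
  using A3[of L m L' m' n n'] assms by (auto simp: blk_def)

lemma blk_space:
  assumes "blk L m n" "blk L m n'" "n < n'"
  shows "n + 2 * L \<le> n'"
proof -
  have "real n + real L + real L \<le> real n' * real m / real m" using blk_order(2)[OF assms] .
  moreover have "m \<ge> 1" using assms by (simp add: blk_def)
  ultimately show ?thesis by simp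
qed

lemma blk_same:
  assumes "blk L m n" "blk L' m' n"
  shows "L = L' \<and> m = m'"
proof (rule ccontr)
  assume "\<not> (L = L' \<and> m = m')"
  hence "A L m \<inter> A L' m' = {}" using A2[of L m L' m'] assms by (auto simp: blk_def)
  then show False using assms by (auto simp: blk_def)
qed

definition inb :: "nat \<Rightarrow> nat \<Rightarrow> nat \<Rightarrow> nat \<Rightarrow> bool" where
  "inb k L m n \<longleftrightarrow> blk L m n \<and> n \<le> k \<and> k < n + len L"

lemma inb_unique:
  assumes "inb k L m n" "inb k L' m' n'"
  shows "L = L' \<and> m = m' \<and> n = n'"
proof -
  have *: False if "inb k L m n" "inb k L' m' n'" "n < n'" for L m n L' m' n'
  proof -
    have "n + L \<le> n'" using blk_order(1)[of L m n L' m' n'] that by (auto simp: inb_def)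
    moreover have "len L \<le> L" by (rule len_le)
    ultimately show False using that by (auto simp: inb_def)
  qed
  consider "n < n'" | "n' < n" | "n = n'" by linarith
  then show ?thesis
  proof cases
    case 1 then show ?thesis using *[OF assms] by blast
  next
    case 2 then show ?thesis using *[OF assms(2,1)] by blast
  next
    case 3 then show ?thesis using blk_same[of L m n L' m'] assms by (auto simp: inb_def)
  qed
qed

definition bo :: "nat \<Rightarrow> nat \<times> nat \<times> nat" where
  "bo k = (THE b. inb k (fst b) (fst (snd b)) (snd (snd b)))"

lemma bo: "inb k L m n \<Longrightarrow> bo k = (L, m, n)"
  unfolding bo_def
  by (rule the_equality) (use inb_unique in auto)

definition u :: "nat \<Rightarrow> complex" where
  "u k = (if \<exists>L m n. inb k L m n then
            (case bo k of (L, m, n) \<Rightarrow> croot m (Tl L ! (k - n) / lam ^ n)) else 0)"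

lemma u_blk:
  assumes "blk L m n" "i < len L"
  shows "u (n + i) = croot m (Tl L ! i / lam ^ n)"
proof -
  have "inb (n + i) L m n" using assms by (simp add: inb_def)
  then show ?thesis unfolding u_def using bo by auto
qed

lemma u_nz: "u k \<noteq> 0 \<Longrightarrow> \<exists>L m n. inb k L m n"
  by (auto simp: u_def split: if_splits)

lemma inb_split: "inb k L m n \<Longrightarrow> \<exists>i. i < len L \<and> k = n + i"
  by (auto simp: inb_def intro: exI[of _ "k - n"])

lemma u_pow:
  assumes "blk L m n" "i < len L"
  shows "lam ^ n * u (n + i) ^ m = Tl L ! i"
proof -
  have "m \<ge> 1" using assms by (simp add: blk_def)
  hence "u (n + i) ^ m = Tl L ! i / lam ^ n" using u_blk[OF assms] croot_pow by simp
  moreover have "lam ^ n \<noteq> 0" using lam by auto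
  ultimately show ?thesis by simp
qed

lemma u_normpow:
  assumes "blk L m n" "i < len L"
  shows "norm (u (n + i)) ^ m \<le> real L / c ^ n"
proof -
  have "norm (lam ^ n * u (n + i) ^ m) \<le> real L" using u_pow[OF assms] Tl_bound[OF assms(2)] by simp
  hence "c ^ n * norm (u (n + i)) ^ m \<le> real L" by (simp add: c_def norm_mult norm_power)
  then show ?thesis using c0 by (simp add: field_simps)
qed

lemma cpow_ge_L:
  assumes "blk L m n"
  shows "real L \<le> c ^ n"
proof -
  have "real L \<le> c ^ Nth L" by (rule Nth(1))
  also have "\<dots> \<le> c ^ n" using c1 assms by (intro power_increasing) (auto simp: blk_def)
  finally show ?thesis .
qed

lemma u_le1: "norm (u k) \<le> 1"
proof (cases "u k = 0")
  case False
  then obtain L m n where ib: "inb k L m n" using u_nz by blast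
  then obtain i where i: "i < len L" "k = n + i" using inb_split by blast
  have b: "blk L m n" using ib by (simp add: inb_def)
  have m1: "1 \<le> m" using b by (simp add: blk_def)
  have "norm (u k) ^ m \<le> real L / c ^ n" using u_normpow[OF b i(1)] i by simp
  also have "\<dots> \<le> 1" using cpow_ge_L[OF b] c0 by simp
  finally have "norm (u k) ^ m \<le> 1" .
  then show ?thesis using m1 by (metis norm_ge_zero not_le one_less_power le_less_trans less_le_trans linorder_not_less zero_less_one)
qed simp

lemma u_powr_bound:
  assumes b: "blk L m n" and i: "i < len L" and \<mu>: "1 \<le> \<mu>"
  shows "norm (u (n + i)) ^ \<mu> \<le> real L ^ \<mu> * c powr (- (real n * real \<mu> / real m))"
proof (cases "u (n + i) = 0")
  case True then show ?thesis using \<mu> by (simp add: zero_power)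
next
  case False
  define a where "a = norm (u (n + i))"
  have a0: "0 < a" using False by (simp add: a_def)
  have m1: "1 \<le> m" and L1: "1 \<le> L" using b by (auto simp: blk_def)
  have am: "a ^ m \<le> real L / c ^ n" using u_normpow[OF b i] by (simp add: a_def)
  have "a ^ \<mu> = (a ^ m) powr (real \<mu> / real m)"
    using a0 m1 by (simp add: powr_realpow[symmetric] powr_powr)
  also have "\<dots> \<le> (real L / c ^ n) powr (real \<mu> / real m)"
    using am a0 by (intro powr_mono2) auto
  also have "\<dots> = real L powr (real \<mu> / real m) / (c ^ n) powr (real \<mu> / real m)"
    using c0 by (simp add: powr_divide)
  also have "(c ^ n) powr (real \<mu> / real m) = c powr (real n * real \<mu> / real m)"
    using c0 by (simp add: powr_realpow[symmetric] powr_powr)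
  also have "real L powr (real \<mu> / real m) \<le> real L powr real \<mu>"
    using L1 m1 \<mu> by (intro powr_mono) (auto simp: field_simps)
  also have "real L powr real \<mu> = real L ^ \<mu>" using L1 by (simp add: powr_realpow)
  finally show ?thesis using c0 by (simp add: a_def powr_minus divide_inverse)
qed

end


lemma geom_partial_le:
  fixes r :: real
  assumes "0 \<le> r" "r < 1"
  shows "(\<Sum>j<J. r ^ j) \<le> 1 / (1 - r)"
proof -
  have s: "summable (\<lambda>j. r ^ j)" using assms by (simp add: summable_geometric)
  have "(\<Sum>j<J. r ^ j) \<le> (\<Sum>j. r ^ j)"
    by (rule sum_le_suminf[OF s]) (use assms in auto)
  also have "\<dots> = 1 / (1 - r)" using suminf_geometric[of r] assms by simp
  finally show ?thesis .
qed

context suff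
begin

lemma cpow_floor:
  assumes "0 \<le> X"
  shows "c powr (- X) \<le> (1 / c) ^ nat \<lfloor>X\<rfloor>"
proof -
  have fl: "real (nat \<lfloor>X\<rfloor>) \<le> X" using assms by linarith
  have "c powr (- X) \<le> c powr (- real (nat \<lfloor>X\<rfloor>))"
    using c1 fl by (intro powr_mono) auto
  also have "\<dots> = (1 / c) ^ nat \<lfloor>X\<rfloor>"
    using c0 by (simp add: powr_minus powr_realpow power_one_over inverse_eq_divide)
  finally show ?thesis .
qed

lemma GL_inner:
  fixes f :: "nat \<Rightarrow> real" and X :: "nat \<Rightarrow> nat \<Rightarrow> nat \<Rightarrow> real" and BN :: "nat \<Rightarrow> nat"
  assumes Q: "finite Q"
    and qb: "\<And>k. k \<in> Q \<Longrightarrow> inb k L m (BN k) \<and> 0 \<le> X L m (BN k) \<and> f k \<le> b * c powr (- X L m (BN k))"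
    and Xsp: "\<And>n n'. blk L m n \<Longrightarrow> blk L m n' \<Longrightarrow> n < n' \<Longrightarrow> X L m n + 1 \<le> X L m n'"
    and b0: "0 \<le> b"
  shows "sum f Q \<le> b * real L * (c / (c - 1))"
proof -
  define \<phi> where "\<phi> k = (nat \<lfloor>X L m (BN k)\<rfloor>, k - BN k)" for k
  have inj: "inj_on \<phi> Q"
  proof (rule inj_onI)
    fix k1 k2 assume k1: "k1 \<in> Q" and k2: "k2 \<in> Q" and eq: "\<phi> k1 = \<phi> k2"
    have *: False if "k1 \<in> Q" "k2 \<in> Q" "\<phi> k1 = \<phi> k2" "BN k1 < BN k2" for k1 k2
    proof -
      have "blk L m (BN k1)" "blk L m (BN k2)" using qb that by (auto simp: inb_def)
      hence "X L m (BN k1) + 1 \<le> X L m (BN k2)" using Xsp that by blast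
      hence "\<lfloor>X L m (BN k1)\<rfloor> + 1 \<le> \<lfloor>X L m (BN k2)\<rfloor>"
        using floor_mono[of "X L m (BN k1) + 1" "X L m (BN k2)"] by simp
      moreover have "0 \<le> \<lfloor>X L m (BN k1)\<rfloor>" using qb that by auto
      ultimately have "nat \<lfloor>X L m (BN k1)\<rfloor> \<noteq> nat \<lfloor>X L m (BN k2)\<rfloor>" by linarith
      then show False using that by (simp add: \<phi>_def)
    qed
    consider "BN k1 < BN k2" | "BN k2 < BN k1" | "BN k1 = BN k2" by linarith
    then show "k1 = k2"
    proof cases
      case 1 then show ?thesis using *[OF k1 k2 eq] by blast
    next
      case 2 then show ?thesis using *[OF k2 k1 eq[symmetric]] by blast
    next
      case 3
      have "BN k1 \<le> k1" "BN k2 \<le> k2" using qb k1 k2 by (auto simp: inb_def)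
      then show ?thesis using eq 3 by (simp add: \<phi>_def)
    qed
  qed
  define J where "J = Suc (Max (insert 0 (fst ` \<phi> ` Q)))"
  have sub: "\<phi> ` Q \<subseteq> {..<J} \<times> {..<L}"
  proof
    fix t assume "t \<in> \<phi> ` Q"
    then obtain k where k: "k \<in> Q" "t = \<phi> k" by blast
    have "fst t \<le> Max (insert 0 (fst ` \<phi> ` Q))"
      using k Q by (intro Max_ge) auto
    moreover have "k - BN k < L" using qb[OF k(1)] len_le[of L] by (auto simp: inb_def)
    ultimately show "t \<in> {..<J} \<times> {..<L}" using k by (auto simp: J_def \<phi>_def)
  qed
  define h where "h = (\<lambda>(j::nat, i::nat). b * (1 / c) ^ j)"
  have "sum f Q \<le> sum (\<lambda>k. h (\<phi> k)) Q"
  proof (rule sum_mono)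
    fix k assume k: "k \<in> Q"
    have "f k \<le> b * c powr (- X L m (BN k))" using qb[OF k] by blast
    also have "\<dots> \<le> b * (1 / c) ^ nat \<lfloor>X L m (BN k)\<rfloor>"
      using cpow_floor qb[OF k] b0 by (intro mult_left_mono) auto
    finally show "f k \<le> h (\<phi> k)" by (simp add: h_def \<phi>_def)
  qed
  also have "\<dots> = sum h (\<phi> ` Q)" by (rule sum.reindex[OF inj, symmetric, unfolded comp_def])
  also have "\<dots> \<le> sum h ({..<J} \<times> {..<L})"
    by (rule sum_mono2) (use sub b0 c0 in \<open>auto simp: h_def\<close>)
  also have "\<dots> = (\<Sum>j<J. \<Sum>i<L. b * (1 / c) ^ j)"
    unfolding h_def by (rule sum.cartesian_product[symmetric])
  also have "\<dots> = b * real L * (\<Sum>j<J. (1 / c) ^ j)"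
    by (simp add: sum_distrib_left mult_ac)
  also have "(\<Sum>j<J. (1 / c) ^ j) \<le> 1 / (1 - 1 / c)"
    by (rule geom_partial_le) (use c1 in auto)
  also have "1 / (1 - 1 / c) = c / (c - 1)" using c1 by (simp add: field_simps)
  finally show ?thesis using b0 by (simp add: mult_left_mono)
qed

lemma GL:
  fixes f \<beta> :: "nat \<Rightarrow> real" and X :: "nat \<Rightarrow> nat \<Rightarrow> nat \<Rightarrow> real"
  assumes f0: "\<And>k. 0 \<le> f k" and \<beta>0: "\<And>L. 0 \<le> \<beta> L" and s\<beta>: "summable (\<lambda>L. real L ^ 2 * \<beta> L)"
    and fb: "\<And>k. f k \<noteq> 0 \<Longrightarrow> \<exists>L m n. inb k L m n \<and> 0 \<le> X L m n \<and> f k \<le> \<beta> L * c powr (- X L m n)"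
    and Xsp: "\<And>L m n n'. blk L m n \<Longrightarrow> blk L m n' \<Longrightarrow> n < n' \<Longrightarrow> X L m n + 1 \<le> X L m n'"
    and K: "finite K"
  shows "sum f K \<le> (\<Sum>L. real L ^ 2 * \<beta> L) * (c / (c - 1))"
proof -
  define K' where "K' = {k \<in> K. f k \<noteq> 0}"
  have fK': "finite K'" using K by (simp add: K'_def)
  have e1: "sum f K = sum f K'" by (rule sum.mono_neutral_right) (use K in \<open>auto simp: K'_def\<close>)
  define BL where "BL k = fst (bo k)" for k
  define BM where "BM k = fst (snd (bo k))" for k
  define BN where "BN k = snd (snd (bo k))" for k
  have kb: "inb k (BL k) (BM k) (BN k) \<and> 0 \<le> X (BL k) (BM k) (BN k) \<and>
            f k \<le> \<beta> (BL k) * c powr (- X (BL k) (BM k) (BN k))" if "k \<in> K'" for k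
  proof -
    have "f k \<noteq> 0" using that by (simp add: K'_def)
    from fb[OF this] obtain L m n where *: "inb k L m n" "0 \<le> X L m n" "f k \<le> \<beta> L * c powr (- X L m n)"
      by blast
    have "bo k = (L, m, n)" using bo[OF *(1)] .
    then show ?thesis using * by (simp add: BL_def BM_def BN_def)
  qed
  define g where "g k = (BL k, BM k)" for k
  define M where "M = Max (insert 0 K)"
  define T where "T = Sigma {..M} (\<lambda>L. {1..L})"
  have fT: "finite T" by (simp add: T_def)
  have gT: "g ` K' \<subseteq> T"
  proof
    fix y assume "y \<in> g ` K'"
    then obtain k where k: "k \<in> K'" "y = g k" by blast
    have ib: "inb k (BL k) (BM k) (BN k)" using kb[OF k(1)] by blast
    hence bb: "blk (BL k) (BM k) (BN k)" "BN k \<le> k" by (auto simp: inb_def)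
    have "BL k \<le> Nth (BL k)" by (rule Nth(3))
    hence "BL k \<le> k" using bb by (auto simp: blk_def)
    moreover have "k \<le> M" unfolding M_def using k K by (intro Max_ge) (auto simp: K'_def)
    moreover have "1 \<le> BM k" "BM k \<le> BL k" using bb by (auto simp: blk_def)
    ultimately show "y \<in> T" using k by (auto simp: T_def g_def)
  qed
  have cc: "0 \<le> c / (c - 1)" using c1 by simp
  have "sum f K' = (\<Sum>y\<in>T. sum f {k \<in> K'. g k = y})" by (rule sum.group[symmetric, OF fK' fT gT])
  also have "\<dots> \<le> (\<Sum>(L, m)\<in>T. \<beta> L * real L * (c / (c - 1)))"
  proof (rule sum_mono)
    fix y assume "y \<in> T"
    obtain L m where y: "y = (L, m)" by (cases y)
    have "sum f {k \<in> K'. g k = y} \<le> \<beta> L * real L * (c / (c - 1))"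
    proof (rule GL_inner[where BN = BN and X = X and m = m])
      show "finite {k \<in> K'. g k = y}" using fK' by simp
    next
      fix k assume "k \<in> {k \<in> K'. g k = y}"
      then have "k \<in> K'" "BL k = L" "BM k = m" by (auto simp: g_def y)
      then show "inb k L m (BN k) \<and> 0 \<le> X L m (BN k) \<and> f k \<le> \<beta> L * c powr (- X L m (BN k))"
        using kb by metis
    next
      fix n n' assume "blk L m n" "blk L m n'" "n < n'"
      then show "X L m n + 1 \<le> X L m n'" by (rule Xsp)
    qed (rule \<beta>0)
    then show "sum f {k \<in> K'. g k = y} \<le> (case y of (L, m) \<Rightarrow> \<beta> L * real L * (c / (c - 1)))"
      using y by simp
  qed
  also have "\<dots> = (\<Sum>L\<le>M. \<Sum>m\<in>{1..L}. \<beta> L * real L * (c / (c - 1)))"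
    unfolding T_def by (rule sum.Sigma[symmetric]) auto
  also have "\<dots> = (\<Sum>L\<le>M. (real L ^ 2 * \<beta> L) * (c / (c - 1)))"
    by (rule sum.cong) (simp_all add: power2_eq_square)
  also have "\<dots> = (\<Sum>L\<le>M. real L ^ 2 * \<beta> L) * (c / (c - 1))"
    by (rule sum_distrib_right[symmetric])
  also have "\<dots> \<le> (\<Sum>L. real L ^ 2 * \<beta> L) * (c / (c - 1))"
  proof (rule mult_right_mono[OF _ cc])
    show "(\<Sum>L\<le>M. real L ^ 2 * \<beta> L) \<le> (\<Sum>L. real L ^ 2 * \<beta> L)"
      by (rule sum_le_suminf[OF s\<beta>]) (use \<beta>0 in auto)
  qed
  finally show ?thesis using e1 by simp
qed

end


context suff
begin

lemma cpow_half: "c powr (- (real j / 2)) = (c powr (-1/2)) ^ j"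
  using c0 by (simp add: powr_realpow[symmetric] powr_powr)

lemma cpow_int: "c powr (- real j) = (1 / c) ^ j"
  using c0 by (simp add: powr_minus powr_realpow power_one_over inverse_eq_divide)

lemma u_l1: "summable (\<lambda>k. norm (u k))"
proof -
  define \<beta> where "\<beta> L = real L * c powr (- real L)" for L :: nat
  define X where "X L m n = real n / (2 * real m)" for L m n :: nat
  have s\<beta>: "summable (\<lambda>L. real L ^ 2 * \<beta> L)"
  proof -
    have "summable (\<lambda>L. real L ^ 3 * (1 / c) ^ L)"
      by (rule summable_poly_geom) (use c1 in auto)
    moreover have "real L ^ 3 * (1 / c) ^ L = real L ^ 2 * \<beta> L" for L
      by (simp add: \<beta>_def cpow_int power3_eq_cube power2_eq_square)
    ultimately show ?thesis by simp
  qed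
  have bnd: "sum (\<lambda>k. norm (u k)) K \<le> (\<Sum>L. real L ^ 2 * \<beta> L) * (c / (c - 1))" if "finite K" for K
  proof (rule GL[where X = X])
    show "0 \<le> \<beta> L" for L by (simp add: \<beta>_def)
    show "summable (\<lambda>L. real L ^ 2 * \<beta> L)" by (rule s\<beta>)
    show "finite K" by (rule that)
  next
    fix k assume "norm (u k) \<noteq> 0"
    then have "u k \<noteq> 0" by simp
    then obtain L m n where ib: "inb k L m n" using u_nz[of k] by blast
    then obtain i where i: "i < len L" "k = n + i" using inb_split by blast
    have b: "blk L m n" using ib by (simp add: inb_def)
    have m1: "1 \<le> m" and mL: "m \<le> L" and nN: "Nth L < n" using b by (auto simp: blk_def)
    have "norm (u k) ^ 1 \<le> real L ^ 1 * c powr (- (real n * real 1 / real m))"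
      using u_powr_bound[OF b i(1), of 1] i by simp
    hence uk: "norm (u k) \<le> real L * c powr (- (real n / real m))" by simp
    have e: "c powr (- (real n / real m)) = c powr (- (real n / (2 * real m))) * c powr (- X L m n)"
      by (simp add: X_def powr_add[symmetric])
    have ineq: "c powr (- (real n / (2 * real m))) \<le> c powr (- real L)"
    proof (rule powr_mono)
      have "2 * L * L \<le> Nth L" by (rule Nth(2))
      moreover have "L * (2 * m) \<le> 2 * L * L" using mL by (simp add: mult.commute mult_le_mono2)
      ultimately have "L * (2 * m) \<le> n" using nN by linarith
      hence "real (L * (2 * m)) \<le> real n" by (rule of_nat_mono)
      hence "real L * (2 * real m) \<le> real n" by simp
      then show "- (real n / (2 * real m)) \<le> - real L" using m1 by (simp add: field_simps)
    qed (use c1 in auto)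
    have "c powr (- (real n / real m)) \<le> c powr (- real L) * c powr (- X L m n)"
      unfolding e by (rule mult_right_mono[OF ineq]) simp
    hence "real L * c powr (- (real n / real m)) \<le> real L * (c powr (- real L) * c powr (- X L m n))"
      by (rule mult_left_mono) simp
    hence "norm (u k) \<le> real L * (c powr (- real L) * c powr (- X L m n))"
      using uk by linarith
    then show "\<exists>L m n. inb k L m n \<and> 0 \<le> X L m n \<and> norm (u k) \<le> \<beta> L * c powr (- X L m n)"
      using ib by (intro exI[of _ L] exI[of _ m] exI[of _ n]) (auto simp: X_def \<beta>_def mult_ac)
  next
    fix L m n n' assume b: "blk L m n" "blk L m n'" "n < n'"
    have sp: "n + 2 * L \<le> n'" using blk_space[OF b] .
    have m1: "1 \<le> m" and mL: "m \<le> L" using b by (auto simp: blk_def)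
    have "real n + 2 * real m \<le> real n'" using sp mL by linarith
    hence "(real n + 2 * real m) / (2 * real m) \<le> real n' / (2 * real m)"
      by (rule divide_right_mono) simp
    moreover have "(real n + 2 * real m) / (2 * real m) = real n / (2 * real m) + 1"
      using m1 by (simp add: add_divide_distrib)
    ultimately show "X L m n + 1 \<le> X L m n'" by (simp add: X_def)
  qed simp
  show ?thesis
    by (rule summableI_nonneg_bounded[of _ "(\<Sum>L. real L ^ 2 * \<beta> L) * (c / (c - 1))"])
       (use bnd in auto)
qed

lemma polyu_l1:
  assumes "poly p 0 = 0"
  shows "summable (\<lambda>k. norm (poly p (u k)))"
proof -
  obtain C where C: "C \<ge> 0" "\<And>z. norm z \<le> 1 \<Longrightarrow> norm (poly p z) \<le> C * norm z"
    using poly_lin[OF assms] by blast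
  show ?thesis
  proof (rule summable_comparison_test'[where N = 0])
    show "summable (\<lambda>k. C * norm (u k))" using u_l1 by (rule summable_mult)
    show "norm (norm (poly p (u k))) \<le> C * norm (u k)" for k using C(2)[OF u_le1] by simp
  qed
qed

lemma shift_l1:
  assumes "summable (\<lambda>k. norm (g k))"
  shows "summable (\<lambda>k. norm (lam ^ n * g (n + k)))"
proof -
  have "summable (\<lambda>k. norm (g (k + n)))" using assms by (subst summable_iff_shift)
  hence "summable (\<lambda>k. norm (lam ^ n) * norm (g (k + n)))" by (rule summable_mult)
  then show ?thesis by (simp add: norm_mult add.commute)
qed

end


lemma half_lin: "(a::real) + 2 \<le> b \<Longrightarrow> (a - n) / 2 + 1 \<le> (b - n) / 2" by (simp add: field_simps)

context suff
begin

lemma tail_bound: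
  assumes b: "blk L m n" and w: "len L = w"
    and Cp: "0 \<le> Cp" "\<And>z. norm z \<le> 1 \<Longrightarrow> norm (poly p z) \<le> Cp * norm z ^ m"
    and p0: "poly p 0 = 0"
    and K: "finite K" "K \<subseteq> {w..}"
  shows "(\<Sum>k\<in>K. norm (lam ^ n * poly p (u (n + k))))
           \<le> Cp * c powr (- (real L / 2)) * (\<Sum>L'. real L' ^ (m + 2) * (c powr (-1/2)) ^ L') * (c / (c - 1))"
proof -
  have m1: "1 \<le> m" using b by (simp add: blk_def)
  define r where "r = c powr (-1/2)"
  have r0: "0 \<le> r" "r < 1" using c1 by (auto simp: r_def intro: powr_less_one)
  define f where "f j = (if n + w \<le> j then c ^ n * norm (poly p (u j)) else 0)" for j
  define \<beta> where "\<beta> L' = Cp * c powr (- (real L / 2)) * (real L' ^ m * c powr (- (real L' / 2)))" for L' :: nat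
  define X where "X L' m' n' = (real n' * real m / real m' - real n) / 2" for L' m' n' :: nat
  have eq: "(\<Sum>k\<in>K. norm (lam ^ n * poly p (u (n + k)))) = sum f ((\<lambda>k. n + k) ` K)"
  proof -
    have "sum f ((\<lambda>k. n + k) ` K) = sum (\<lambda>k. f (n + k)) K"
      by (subst sum.reindex) (auto simp: inj_on_def)
    also have "\<dots> = (\<Sum>k\<in>K. norm (lam ^ n * poly p (u (n + k))))"
      by (rule sum.cong) (use K(2) in \<open>auto simp: f_def c_def norm_mult norm_power\<close>)
    finally show ?thesis by simp
  qed
  have sg: "summable (\<lambda>L'. real L' ^ (m + 2) * r ^ L')" by (rule summable_poly_geom[OF r0])
  have \<beta>eq: "real L' ^ 2 * \<beta> L' = Cp * c powr (- (real L / 2)) * (real L' ^ (m + 2) * r ^ L')" for L'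
    by (simp add: \<beta>_def r_def cpow_half power_add power2_eq_square mult_ac)
  have s\<beta>: "summable (\<lambda>L'. real L' ^ 2 * \<beta> L')"
    unfolding \<beta>eq by (rule summable_mult[OF sg])
  have sum\<beta>: "(\<Sum>L'. real L' ^ 2 * \<beta> L') = Cp * c powr (- (real L / 2)) * (\<Sum>L'. real L' ^ (m + 2) * r ^ L')"
    unfolding \<beta>eq by (rule suminf_mult[OF sg])
  have "sum f ((\<lambda>k. n + k) ` K) \<le> (\<Sum>L'. real L' ^ 2 * \<beta> L') * (c / (c - 1))"
  proof (rule GL[where X = X])
    show "0 \<le> f j" for j using c0 by (simp add: f_def)
    show "0 \<le> \<beta> L'" for L' using Cp by (simp add: \<beta>_def)
    show "summable (\<lambda>L'. real L' ^ 2 * \<beta> L')" by (rule s\<beta>)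
    show "finite ((\<lambda>k. n + k) ` K)" using K by simp
  next
    fix j assume fj: "f j \<noteq> 0"
    hence jw: "n + w \<le> j" and pz: "poly p (u j) \<noteq> 0" by (auto simp: f_def split: if_splits)
    have "u j \<noteq> 0" using pz p0 by auto
    then obtain L' m' n' where ib: "inb j L' m' n'" using u_nz[of j] by blast
    then obtain i where i: "i < len L'" "j = n' + i" using inb_split by blast
    have b': "blk L' m' n'" using ib by (simp add: inb_def)
    have nn: "n < n'"
    proof -
      consider "n' < n" | "n' = n" | "n < n'" by linarith
      then show ?thesis
      proof cases
        case 1
        have "n' + L' \<le> n" using blk_order(1)[OF b' b 1] .
        moreover have "len L' \<le> L'" by (rule len_le)
        ultimately show ?thesis using i jw by linarith
      next
        case 2
        then have "L' = L" using blk_same[of L m n L' m'] b b' by auto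
        then show ?thesis using i jw w 2 by auto
      qed
    qed
    have ord: "real n + real L + real L' \<le> real n' * real m / real m'" using blk_order(2)[OF b b' nn] .
    have XL: "(real L + real L') / 2 \<le> X L' m' n'" unfolding X_def by (rule divide_right_mono) (use ord in linarith, simp)
    have "0 \<le> (real L + real L') / 2" by simp
    hence X0: "0 \<le> X L' m' n'" using XL by linarith
    have "f j = c ^ n * norm (poly p (u j))" using jw by (simp add: f_def)
    also have "\<dots> \<le> c ^ n * (Cp * norm (u j) ^ m)"
      using Cp(2)[OF u_le1] c0 by (intro mult_left_mono) auto
    also have "\<dots> \<le> c ^ n * (Cp * (real L' ^ m * c powr (- (real n' * real m / real m'))))"
      using u_powr_bound[OF b' i(1) m1] i Cp c0 by (intro mult_left_mono) auto
    also have "\<dots> = Cp * real L' ^ m * (c powr real n * c powr (- (real n' * real m / real m')))"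
      using c0 by (simp add: powr_realpow mult_ac)
    also have "c powr real n * c powr (- (real n' * real m / real m')) = c powr (- X L' m' n') * c powr (- X L' m' n')"
    proof -
      have ex: "real n + - (real n' * real m / real m') = - X L' m' n' + - X L' m' n'"
        unfolding X_def by (simp add: field_simps)
      show ?thesis by (simp only: powr_add[symmetric] ex)
    qed
    finally have fj1: "f j \<le> Cp * real L' ^ m * (c powr (- X L' m' n') * c powr (- X L' m' n'))" .
    have ineq: "c powr (- X L' m' n') \<le> c powr (- (real L / 2)) * c powr (- (real L' / 2))"
    proof -
      have e2: "c powr (- (real L / 2)) * c powr (- (real L' / 2)) = c powr (- (real L / 2) + - (real L' / 2))"
        by (rule powr_add[symmetric])
      show ?thesis unfolding e2 using XL c1 by (intro powr_mono) auto
    qed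
    have "c powr (- X L' m' n') * c powr (- X L' m' n') \<le> (c powr (- (real L / 2)) * c powr (- (real L' / 2))) * c powr (- X L' m' n')"
      by (rule mult_right_mono[OF ineq]) simp
    hence "Cp * real L' ^ m * (c powr (- X L' m' n') * c powr (- X L' m' n')) \<le> Cp * real L' ^ m * ((c powr (- (real L / 2)) * c powr (- (real L' / 2))) * c powr (- X L' m' n'))"
      by (rule mult_left_mono) (use Cp in simp)
    with fj1 have "f j \<le> Cp * real L' ^ m * ((c powr (- (real L / 2)) * c powr (- (real L' / 2))) * c powr (- X L' m' n'))"
      by linarith
    hence "f j \<le> \<beta> L' * c powr (- X L' m' n')" by (simp add: \<beta>_def mult_ac)
    then show "\<exists>L m n. inb j L m n \<and> 0 \<le> X L m n \<and> f j \<le> \<beta> L * c powr (- X L m n)"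
      using ib X0 by blast
  next
    fix L' m' n1 n2 assume b12: "blk L' m' n1" "blk L' m' n2" "n1 < n2"
    have sp: "n1 + 2 * L' \<le> n2" using blk_space[OF b12] .
    have m1': "1 \<le> m'" and mL: "m' \<le> L'" using b12 by (auto simp: blk_def)
    have "n1 * m + 2 * m' \<le> n2 * m"
    proof -
      have "n1 * m + 2 * L' * m \<le> n2 * m" using sp by (metis add_mult_distrib mult_le_mono1)
      moreover have "2 * m' \<le> 2 * L' * m" using mL m1 by (metis mult_le_mono mult_1_right mult_le_mono2)
      ultimately show ?thesis by linarith
    qed
    hence "real n1 * real m + 2 * real m' \<le> real n2 * real m"
      by (metis of_nat_add of_nat_le_iff of_nat_mult of_nat_numeral)
    hence "(real n1 * real m + 2 * real m') / real m' \<le> real n2 * real m / real m'"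
      by (rule divide_right_mono) simp
    moreover have "(real n1 * real m + 2 * real m') / real m' = real n1 * real m / real m' + 2"
      using m1' by (simp add: add_divide_distrib)
    ultimately have "real n1 * real m / real m' + 2 \<le> real n2 * real m / real m'" by simp
    then show "X L' m' n1 + 1 \<le> X L' m' n2" unfolding X_def using half_lin by blast
  qed
  then show ?thesis using eq sum\<beta> by (simp add: r_def)
qed

end


context suff
begin

lemma hyp_poly:
  assumes pnz: "p \<noteq> 0" and p0: "poly p 0 = 0" and U: "seq_open S U" "U \<noteq> {}"
  shows "{n. (wshift lam ^^ n) (\<lambda>k. poly p (u k)) \<in> U} \<in> F"
proof -
  obtain v where vU: "v \<in> U" using U(2) by blast
  have vc: "v \<in> seq_carrier S" using U(1) vU by (auto simp: seq_open_def)
  obtain e where e0: "0 < e" and ball: "\<And>v'. v' \<in> seq_carrier S \<Longrightarrow> seq_norm S (\<lambda>k. v' k - v k) < e \<Longrightarrow> v' \<in> U"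
    using U(1) vU unfolding seq_open_def by blast
  obtain w \<delta> where \<delta>0: "0 < \<delta>" and \<delta>1: "\<delta> \<le> 1" and AP: "\<And>x. x \<in> seq_carrier S \<Longrightarrow> (\<forall>k<w. norm (x k - v k) \<le> \<delta>) \<Longrightarrow>
            (\<forall>K. finite K \<longrightarrow> K \<subseteq> {w..} \<longrightarrow> (\<Sum>k\<in>K. norm (x k)) \<le> \<delta>) \<Longrightarrow>
            seq_norm S (\<lambda>k. x k - v k) < e"
    using approx_lemma[OF adm vc e0] by blast
  obtain m a Cq where m1: "1 \<le> m" and a0: "a \<noteq> 0" and Cq0: "0 \<le> Cq"
    and Cq: "\<And>z. norm z \<le> 1 \<Longrightarrow> norm (poly p z - z ^ m * a) \<le> Cq * norm z ^ (m + 1)"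
    using poly_lowest[OF pnz p0] by blast
  define Cp where "Cp = norm a + Cq"
  have Cp0: "0 \<le> Cp" using Cq0 by (simp add: Cp_def)
  have Cpb: "norm (poly p z) \<le> Cp * norm z ^ m" if z: "norm z \<le> 1" for z
  proof -
    have "norm (poly p z) \<le> norm (z ^ m * a) + norm (poly p z - z ^ m * a)"
      by (rule norm_triangle_sub)
    also have "\<dots> \<le> norm z ^ m * norm a + Cq * norm z ^ (m + 1)"
      using Cq[OF z] by (simp add: norm_mult norm_power)
    also have "Cq * norm z ^ (m + 1) \<le> Cq * norm z ^ m"
    proof -
      have "norm z ^ (m + 1) \<le> norm z ^ m" using z by (simp add: mult_left_le_one_le)
      then show ?thesis using Cq0 by (rule mult_left_mono)
    qed
    finally show ?thesis by (simp add: Cp_def algebra_simps)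
  qed
  define \<eta> where "\<eta> = \<delta> / (2 * norm a)"
  have \<eta>0: "0 < \<eta>" using \<delta>0 a0 by (simp add: \<eta>_def)
  obtain t where tl: "length (Tg t) = length (map (\<lambda>i. v i / a) [0..<w])"
    and tc: "\<forall>i<length (map (\<lambda>i. v i / a) [0..<w]). norm (Tg t ! i - map (\<lambda>i. v i / a) [0..<w] ! i) < \<eta>"
    using Tg_dense[OF \<eta>0] by blast
  have tw: "length (Tg t) = w" using tl by simp
  have tclose: "norm (a * Tg t ! i - v i) \<le> \<delta> / 2" if i: "i < w" for i
  proof -
    have "norm (Tg t ! i - v i / a) < \<eta>" using tc i by simp
    moreover have "a * Tg t ! i - v i = a * (Tg t ! i - v i / a)" using a0 by (simp add: field_simps)
    ultimately have "norm (a * Tg t ! i - v i) \<le> norm a * \<eta>"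
      by (simp add: norm_mult mult_left_mono)
    also have "\<dots> = \<delta> / 2" using a0 by (simp add: \<eta>_def)
    finally show ?thesis .
  qed
  define B0 where "B0 = nat \<lceil>Max (insert 0 (norm ` set (Tg t)))\<rceil>"
  have B0: "norm z \<le> real B0" if "z \<in> set (Tg t)" for z
  proof -
    have "norm z \<le> Max (insert 0 (norm ` set (Tg t)))" using that by (intro Max_ge) auto
    also have "\<dots> \<le> real B0" unfolding B0_def by linarith
    finally show ?thesis .
  qed
  define r where "r = c powr (-1/2)"
  have r0: "0 \<le> r" "r < 1" using c1 by (auto simp: r_def intro: powr_less_one)
  define Km where "Km = (\<Sum>L. real L ^ (m + 2) * r ^ L)"
  have Km0: "0 \<le> Km" unfolding Km_def
    by (rule suminf_nonneg[OF summable_poly_geom[OF r0]]) (use r0 in auto)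
  define G where "G = Cp * Km * (c / (c - 1))"
  have G0: "0 \<le> G" using Cp0 Km0 c1 by (simp add: G_def)
  obtain j0 where j0: "r ^ j0 < \<delta> / (2 * (G + 1))"
    using real_arch_pow_inv[of "\<delta> / (2 * (G + 1))" r] \<delta>0 G0 r0 by auto
  define jj where "jj = max j0 (max m (max w B0))"
  define L where "L = prod_encode (t, jj)"
  have LL: "jj \<le> L" by (simp add: L_def le_prod_encode_2)
  have Ld: "fst (prod_decode L) = t" by (simp add: L_def)
  have TlL: "Tl L = Tg t"
  proof -
    have "length (Tg t) \<le> L" using LL tw by (simp add: jj_def)
    moreover have "\<forall>z\<in>set (Tg t). norm z \<le> real L"
    proof
      fix z assume "z \<in> set (Tg t)"
      hence "norm z \<le> real B0" by (rule B0)
      also have "real B0 \<le> real L" using LL by (simp add: jj_def)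
      finally show "norm z \<le> real L" .
    qed
    ultimately show ?thesis by (simp add: Tl_def Ld)
  qed
  have lenL: "len L = w" using TlL tw by (simp add: len_def)
  have mL: "m \<le> L" using LL by (simp add: jj_def)
  have L1: "1 \<le> L" using m1 mL by simp
  have small: "c powr (- (real L / 2)) * G \<le> \<delta> / 2"
  proof -
    have "c powr (- (real L / 2)) = r ^ L" by (simp add: r_def cpow_half)
    also have "\<dots> \<le> r ^ j0" using r0 LL by (intro power_decreasing) (auto simp: jj_def)
    finally have "c powr (- (real L / 2)) \<le> \<delta> / (2 * (G + 1))" using j0 by simp
    hence "c powr (- (real L / 2)) * G \<le> \<delta> / (2 * (G + 1)) * G" using G0 by (rule mult_right_mono)
    also have "\<dots> \<le> \<delta> / 2"
    proof -
      have "\<delta> / (2 * (G + 1)) * G = \<delta> / 2 * (G / (G + 1))" using G0 by (simp add: field_simps)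
      also have "\<dots> \<le> \<delta> / 2 * 1" using G0 \<delta>0 by (intro mult_left_mono) auto
      finally show ?thesis by simp
    qed
    finally show ?thesis .
  qed
  define \<eta>2 where "\<eta>2 = \<delta> / (2 * (real L * Cq + 1))"
  have \<eta>20: "0 < \<eta>2" using \<delta>0 Cq0 by (simp add: \<eta>2_def add_nonneg_pos)
  have \<eta>2b: "real L * Cq * \<eta>2 \<le> \<delta> / 2"
  proof -
    have "real L * Cq * \<eta>2 = \<delta> / 2 * (real L * Cq / (real L * Cq + 1))"
      using Cq0 by (simp add: \<eta>2_def field_simps)
    also have "\<dots> \<le> \<delta> / 2 * 1"
    proof (rule mult_left_mono)
      have "0 \<le> real L * Cq" using Cq0 by simp
      then show "real L * Cq / (real L * Cq + 1) \<le> 1" by (simp add: divide_le_eq_1)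
    qed (use \<delta>0 in simp)
    finally show ?thesis by simp
  qed
  obtain N2 where N2: "real L / \<eta>2 ^ m < c ^ N2" using real_arch_pow[OF c1] by blast
  define N0 where "N0 = max (Nth L) N2"
  have AF: "A L m - {0..N0} \<in> F" using finv A1[OF L1 m1] by (simp add: finitely_invariant_def)
  have sub: "A L m - {0..N0} \<subseteq> {n. (wshift lam ^^ n) (\<lambda>k. poly p (u k)) \<in> U}"
  proof
    fix n assume "n \<in> A L m - {0..N0}"
    hence nA: "n \<in> A L m" and nN: "N0 < n" by auto
    have b: "blk L m n" using nA nN m1 mL by (simp add: blk_def N0_def)
    define y where "y = (\<lambda>k. lam ^ n * poly p (u (n + k)))"
    have Ty: "(wshift lam ^^ n) (\<lambda>k. poly p (u k)) = y" by (simp add: wshift_pow y_def)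
    have yc: "y \<in> seq_carrier S"
      unfolding y_def by (rule l1_carrier[OF adm shift_l1[OF polyu_l1[OF p0]]])
    have cn: "c ^ N2 \<le> c ^ n" using c1 nN by (intro power_increasing) (auto simp: N0_def)
    have win: "\<forall>k<w. norm (y k - v k) \<le> \<delta>"
    proof (intro allI impI)
      fix k assume kw: "k < w"
      define z where "z = Tg t ! k"
      define uk where "uk = u (n + k)"
      have kL: "k < len L" using kw lenL by simp
      have pw: "lam ^ n * uk ^ m = z" using u_pow[OF b kL] TlL by (simp add: uk_def z_def)
      have zL: "norm z \<le> real L" using Tl_bound[OF kL] TlL by (simp add: z_def)
      have u1: "norm uk \<le> 1" by (simp add: uk_def u_le1)
      have nu: "norm uk \<le> \<eta>2"
      proof -
        have "norm uk ^ m \<le> real L / c ^ n" using u_normpow[OF b kL] by (simp add: uk_def)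
        also have "\<dots> < \<eta>2 ^ m"
        proof -
          have "real L < \<eta>2 ^ m * c ^ N2" using N2 \<eta>20 by (simp add: field_simps)
          also have "\<dots> \<le> \<eta>2 ^ m * c ^ n" using cn \<eta>20 by (intro mult_left_mono) auto
          finally show ?thesis using c0 by (simp add: field_simps)
        qed
        finally have "norm uk ^ Suc (m - 1) \<le> \<eta>2 ^ Suc (m - 1)" using m1 by simp
        then show ?thesis by (rule power_le_imp_le_base) (use \<eta>20 in simp)
      qed
      have eqn: "y k - v k = (z * a - v k) + lam ^ n * (poly p uk - uk ^ m * a)"
        using pw by (simp add: y_def uk_def algebra_simps flip: pw)
      have "norm (y k - v k) \<le> norm (z * a - v k) + norm (lam ^ n * (poly p uk - uk ^ m * a))"
        unfolding eqn by (rule norm_triangle_ineq)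
      also have "norm (z * a - v k) \<le> \<delta> / 2" using tclose[OF kw] by (simp add: z_def mult.commute)
      also have "norm (lam ^ n * (poly p uk - uk ^ m * a)) \<le> c ^ n * (Cq * norm uk ^ (m + 1))"
        using Cq[OF u1] c0 by (simp add: norm_mult norm_power c_def mult_left_mono)
      also have "c ^ n * (Cq * norm uk ^ (m + 1)) = Cq * norm z * norm uk"
      proof -
        have "norm z = c ^ n * norm uk ^ m" using pw by (auto simp: norm_mult norm_power c_def)
        then show ?thesis by (simp add: algebra_simps)
      qed
      also have "Cq * norm z * norm uk \<le> Cq * real L * \<eta>2"
        using Cq0 zL nu by (intro mult_mono mult_left_mono) auto
      also have "\<dots> \<le> \<delta> / 2" using \<eta>2b by (simp add: mult_ac)
      finally show "norm (y k - v k) \<le> \<delta>" by simp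
    qed
    have tail: "\<forall>K. finite K \<longrightarrow> K \<subseteq> {w..} \<longrightarrow> (\<Sum>k\<in>K. norm (y k)) \<le> \<delta>"
    proof (intro allI impI)
      fix K :: "nat set" assume K: "finite K" "K \<subseteq> {w..}"
      have "(\<Sum>k\<in>K. norm (y k)) \<le> Cp * c powr (- (real L / 2)) * Km * (c / (c - 1))"
        using tail_bound[OF b lenL Cp0 Cpb p0 K] by (simp add: y_def Km_def r_def)
      also have "\<dots> = c powr (- (real L / 2)) * G" by (simp add: G_def mult_ac)
      also have "\<dots> \<le> \<delta>" using small \<delta>0 by linarith
      finally show "(\<Sum>k\<in>K. norm (y k)) \<le> \<delta>" .
    qed
    have "seq_norm S (\<lambda>k. y k - v k) < e" by (rule AP[OF yc win tail])
    hence "y \<in> U" by (rule ball[OF yc])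
    then show "n \<in> {n. (wshift lam ^^ n) (\<lambda>k. poly p (u k)) \<in> U}" by (simp add: Ty)
  qed
  show ?thesis using fam AF sub unfolding furstenberg_family_def by blast
qed

end


context suff
begin

lemma suff_exists:
  "\<exists>B. seq_subalgebra S B \<and> B \<noteq> {\<lambda>k. 0} \<and>
     (\<forall>x\<in>B. x \<noteq> (\<lambda>k. 0) \<longrightarrow> A_hypercyclic S F (wshift lam) x)"
proof -
  define B where "B = {x. \<exists>p. poly p 0 = 0 \<and> x = (\<lambda>k. poly p (u k))}"
  have BC: "B \<subseteq> seq_carrier S"
    using l1_carrier[OF adm polyu_l1] by (auto simp: B_def)
  have sub: "seq_subalgebra S B"
    unfolding seq_subalgebra_def
  proof (intro conjI ballI allI)
    show "B \<subseteq> seq_carrier S" by (rule BC)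
    show "(\<lambda>k. 0) \<in> B" unfolding B_def by (intro CollectI exI[of _ 0]) simp
  next
    fix x y assume "x \<in> B" "y \<in> B"
    then obtain p q where p: "poly p 0 = 0" "x = (\<lambda>k. poly p (u k))"
      and q: "poly q 0 = 0" "y = (\<lambda>k. poly q (u k))" by (auto simp: B_def)
    show "(\<lambda>k. x k + y k) \<in> B" unfolding B_def
      by (intro CollectI exI[of _ "p + q"]) (simp add: p q)
    show "(\<lambda>k. x k * y k) \<in> B" unfolding B_def
      by (intro CollectI exI[of _ "p * q"]) (simp add: p q)
  next
    fix a :: complex and x assume "x \<in> B"
    then obtain p where p: "poly p 0 = 0" "x = (\<lambda>k. poly p (u k))" by (auto simp: B_def)
    show "(\<lambda>k. a * x k) \<in> B" unfolding B_def
      by (intro CollectI exI[of _ "smult a p"]) (simp add: p)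
  qed
  have uB: "u \<in> B" unfolding B_def by (intro CollectI exI[of _ "[:0, 1:]"]) simp
  have u0: "u \<noteq> (\<lambda>k. 0)"
  proof -
    obtain t0 where t0: "Tg t0 = [1]" using Tg_one by blast
    define L0 where "L0 = prod_encode (t0, 1)"
    have L01: "1 \<le> L0" unfolding L0_def using le_prod_encode_2[of 1 t0] .
    have TL: "Tl L0 = [1]" using L01 t0 by (simp add: Tl_def L0_def)
    have "A L0 1 - {0..Nth L0} \<in> F" using finv A1[OF L01] by (simp add: finitely_invariant_def)
    hence "A L0 1 - {0..Nth L0} \<noteq> {}" using fam by (auto simp: furstenberg_family_def)
    then obtain n where "n \<in> A L0 1 - {0..Nth L0}" by blast
    hence n: "n \<in> A L0 1" "Nth L0 < n" by auto
    have b: "blk L0 1 n" using n L01 by (simp add: blk_def)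
    have "u (n + 0) = croot 1 (Tl L0 ! 0 / lam ^ n)" by (rule u_blk[OF b]) (simp add: len_def TL)
    also have "\<dots> = 1 / lam ^ n" using croot_pow[of 1 "1 / lam ^ n"] TL by simp
    finally have "u n \<noteq> 0" using lam by auto
    then show ?thesis by auto
  qed
  have hyp: "A_hypercyclic S F (wshift lam) x" if xB: "x \<in> B" and xn: "x \<noteq> (\<lambda>k. 0)" for x
  proof -
    obtain p where p: "poly p 0 = 0" "x = (\<lambda>k. poly p (u k))" using xB by (auto simp: B_def)
    have pnz: "p \<noteq> 0" using p xn by auto
    show ?thesis unfolding A_hypercyclic_def
    proof (intro conjI allI impI)
      show "x \<in> seq_carrier S" using BC xB by auto
      fix U assume "seq_open S U \<and> U \<noteq> {}"
      then show "{n. (wshift lam ^^ n) x \<in> U} \<in> F" using hyp_poly[OF pnz p(1)] p(2) by blast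
    qed
  qed
  show ?thesis
  proof (intro exI[of _ B] conjI sub ballI impI)
    show "B \<noteq> {\<lambda>k. 0}" using uB u0 by blast
  next
    fix x assume "x \<in> B" "x \<noteq> (\<lambda>k. 0)"
    then show "A_hypercyclic S F (wshift lam) x" by (rule hyp)
  qed
qed

end

theorem theorem2p4:
  fixes S :: seqspace and F :: "nat set set" and lam :: complex
  assumes "admissible_space S"
    and "furstenberg_family F" and "finitely_invariant F"
    and "1 < norm lam"
  shows "(\<exists>B. seq_subalgebra S B \<and> B \<noteq> {\<lambda>k. 0} \<and>
            (\<forall>x\<in>B. x \<noteq> (\<lambda>k. 0) \<longrightarrow> A_hypercyclic S F (wshift lam) x))
     \<longleftrightarrow> (\<exists>A :: nat \<Rightarrow> nat \<Rightarrow> nat set.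
            (\<forall>l m. 1 \<le> l \<and> 1 \<le> m \<longrightarrow> A l m \<in> F) \<and>
            (\<forall>l m l' m'. 1 \<le> l \<and> 1 \<le> m \<and> 1 \<le> l' \<and> 1 \<le> m' \<and> (l, m) \<noteq> (l', m')
                \<longrightarrow> A l m \<inter> A l' m' = {}) \<and>
            (\<forall>l m l' m' n n'. 1 \<le> l \<and> 1 \<le> m \<and> 1 \<le> l' \<and> 1 \<le> m' \<and>
                n \<in> A l m \<and> n' \<in> A l' m' \<and> n < n' \<longrightarrow>
                n + l \<le> n' \<and> real n + real l + real l' \<le> real n' * real m / real m'))"
proof
  assume "\<exists>B. seq_subalgebra S B \<and> B \<noteq> {\<lambda>k. 0} \<and>
            (\<forall>x\<in>B. x \<noteq> (\<lambda>k. 0) \<longrightarrow> A_hypercyclic S F (wshift lam) x)"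
  then obtain B where "seq_subalgebra S B" "B \<noteq> {\<lambda>k. 0}"
    "\<forall>x\<in>B. x \<noteq> (\<lambda>k. 0) \<longrightarrow> A_hypercyclic S F (wshift lam) x" by blast
  then show "\<exists>A :: nat \<Rightarrow> nat \<Rightarrow> nat set.
            (\<forall>l m. 1 \<le> l \<and> 1 \<le> m \<longrightarrow> A l m \<in> F) \<and>
            (\<forall>l m l' m'. 1 \<le> l \<and> 1 \<le> m \<and> 1 \<le> l' \<and> 1 \<le> m' \<and> (l, m) \<noteq> (l', m')
                \<longrightarrow> A l m \<inter> A l' m' = {}) \<and>
            (\<forall>l m l' m' n n'. 1 \<le> l \<and> 1 \<le> m \<and> 1 \<le> l' \<and> 1 \<le> m' \<and>
                n \<in> A l m \<and> n' \<in> A l' m' \<and> n < n' \<longrightarrow>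
                n + l \<le> n' \<and> real n + real l + real l' \<le> real n' * real m / real m')"
    by (rule necessity[OF assms(1) assms(4)])
next
  assume "\<exists>A :: nat \<Rightarrow> nat \<Rightarrow> nat set.
            (\<forall>l m. 1 \<le> l \<and> 1 \<le> m \<longrightarrow> A l m \<in> F) \<and>
            (\<forall>l m l' m'. 1 \<le> l \<and> 1 \<le> m \<and> 1 \<le> l' \<and> 1 \<le> m' \<and> (l, m) \<noteq> (l', m')
                \<longrightarrow> A l m \<inter> A l' m' = {}) \<and>
            (\<forall>l m l' m' n n'. 1 \<le> l \<and> 1 \<le> m \<and> 1 \<le> l' \<and> 1 \<le> m' \<and>
                n \<in> A l m \<and> n' \<in> A l' m' \<and> n < n' \<longrightarrow>
                n + l \<le> n' \<and> real n + real l + real l' \<le> real n' * real m / real m')"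
  then obtain A :: "nat \<Rightarrow> nat \<Rightarrow> nat set" where AA:
    "(\<forall>l m. 1 \<le> l \<and> 1 \<le> m \<longrightarrow> A l m \<in> F) \<and>
            (\<forall>l m l' m'. 1 \<le> l \<and> 1 \<le> m \<and> 1 \<le> l' \<and> 1 \<le> m' \<and> (l, m) \<noteq> (l', m')
                \<longrightarrow> A l m \<inter> A l' m' = {}) \<and>
            (\<forall>l m l' m' n n'. 1 \<le> l \<and> 1 \<le> m \<and> 1 \<le> l' \<and> 1 \<le> m' \<and>
                n \<in> A l m \<and> n' \<in> A l' m' \<and> n < n' \<longrightarrow>
                n + l \<le> n' \<and> real n + real l + real l' \<le> real n' * real m / real m')"
    by (rule exE)
  note A1 = AA[THEN conjunct1] and A2 = AA[THEN conjunct2, THEN conjunct1]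
    and A3 = AA[THEN conjunct2, THEN conjunct2]
  interpret suff S F lam A
  proof
    show "admissible_space S" "furstenberg_family F" "finitely_invariant F" "1 < norm lam"
      using assms by auto
  next
    fix l m :: nat assume "1 \<le> l" "1 \<le> m"
    then show "A l m \<in> F" using A1 by blast
  next
    fix l m l' m' :: nat assume "1 \<le> l" "1 \<le> m" "1 \<le> l'" "1 \<le> m'" "(l, m) \<noteq> (l', m')"
    then show "A l m \<inter> A l' m' = {}" using A2 by blast
  next
    fix l m l' m' n n' :: nat assume "1 \<le> l" "1 \<le> m" "1 \<le> l'" "1 \<le> m'" "n \<in> A l m" "n' \<in> A l' m'" "n < n'"
    then show "n + l \<le> n' \<and> real n + real l + real l' \<le> real n' * real m / real m'"
      using A3 by blast
  qed
  show "\<exists>B. seq_subalgebra S B \<and> B \<noteq> {\<lambda>k. 0} \<and>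
            (\<forall>x\<in>B. x \<noteq> (\<lambda>k. 0) \<longrightarrow> A_hypercyclic S F (wshift lam) x)"
    by (rule suff_exists)
qed



end
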